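(* For every $\mathsf{pGCL}$ program $P\in\mathsf{PAST}$, with initial program state $\sigma_0=(P,\eta_0)$, there exist an ordinal $\mathbf{o}$ and functions $g:\mathcal{R}(\sigma_0)\to\mathbf{o}$ (the rank) and $k$ (the certification), assigning to each $\sigma\in\mathcal{R}(\sigma_0)$ a pair $k(\sigma)=(h_\sigma,\epsilon_\sigma)$ with $h_\sigma:\Sigma\to\mathbb{R}$, $\epsilon_\sigma\in\mathbb{R}$, such that: (1) for every $\sigma\in\mathcal{R}(\sigma_0)$, $g(\sigma)=0$ if and only if $\sigma$ is terminal; (2) for every non-terminal $\sigma\in\mathcal{R}(\sigma_0)$, letting $\mathcal{L}(\sigma)=\{\sigma'\in\mathcal{R}(\sigma)\mid g(\sigma')<g(\sigma)\}$, the pair $(h_\sigma,\epsilon_\sigma)$ is an RSM-map and, for every $\tau\in\Sigma$, $h_\sigma(\tau)=0$ if and only if $\tau\in\mathcal{L}(\sigma)\cup(\Sigma\setminus\mathcal{R}(\sigma))$.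
   Context: pGCL. Fix a countable set $\mathrm{Var}$ of variables taking rational values. Programs are generated by $P ::= \bot \mid v:=e \mid P;P \mid P\oplus_p P \mid P\,[\!]\,P \mid \mathtt{while}(b)\{P\}$ ($v\in\mathrm{Var}$, $e,p$ arithmetical expressions, $b$ boolean expression, $\bot$ the empty program; $\oplus_p$ probabilistic choice, $[\!]$ nondeterministic choice). A valuation is $\eta:\mathrm{Var}\to\mathbb{Q}$. A scheduler is a total function $f:\{L_n,R_n,L_p,R_p\}^*\to\{L_n,R_n\}$; $\mathbb{F}$ is the set of schedulers. An execution state is $(P,\eta,a,w)$ with $a\in\mathbb{Q}\cap(0,1]$, $w\in\{L_n,R_n,L_p,R_p\}^*$; a program state is $(P,\eta)$, $\Sigma$ is the set of program states; states with program $\bot$ are terminal. For $f\in\mathbb{F}$, $\to_f$ is the smallest relation with: $(v:=e,\eta,a,w)\to_f(\bot,\eta[v\mapsto[\![e]\!]_\eta],a,w)$; if $(P_1,\eta,a,w)\to_f(P_1',\eta',a',w')$ then $(P_1;P_2,\eta,a,w)\to_f(P_1';P_2,\eta',a',w')$; $(\bot;P_2,\eta,a,w)\to_f(P_2,\eta,a,w)$; $(P_1\oplus_pP_2,\eta,a,w)\to_f(P_2,\eta,a,wR_p)$ if $[\![p]\!]_\eta\le0$, $\to_f(P_1,\eta,a,wL_p)$ if $[\![p]\!]_\eta\ge1$, and if $0<[\![p]\!]_\eta<1$ both $\to_f(P_1,\eta,a[\![p]\!]_\eta,wL_p)$ and $\to_f(P_2,\eta,a(1-[\![p]\!]_\eta),wR_p)$;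 $(P_1[\!]P_2,\eta,a,w)\to_f(P_1,\eta,a,wL_n)$ if $f(w)=L_n$, $\to_f(P_2,\eta,a,wR_n)$ if $f(w)=R_n$; $(\mathtt{while}(b)\{P\},\eta,a,w)\to_f(P;\mathtt{while}(b)\{P\},\eta,a,w)$ if $b$ holds, else $\to_f(\bot,\eta,a,w)$. $\to_f^n$ ($n\ge1$) is the $n$-fold composition, $\to_f^*=\bigcup_{n\ge1}\to_f^n$. For $\sigma=(P,\eta)$ let $\sigma_e=(P,\eta,1,\varepsilon)$. The initial program state of $P$ is $(P,\eta_0)$, $\eta_0\equiv0$. $\mathrm{Prob}((P,\eta,a,w))=a$. $T_{\le k}(\sigma,f)$ is the set of terminal execution states $\tau$ with $\sigma_e\to_f^n\tau$ for some $n\le k$; $\mathrm{ExpRuntime}(\sigma,f)=\sum_{k\in\mathbb{N}}(1-\sum_{\tau\in T_{\le k}(\sigma,f)}\mathrm{Prob}(\tau))$. $\mathsf{PAST}$ is the set of programs $P$ with $\mathrm{ExpRuntime}((P,\eta_0),f)<\infty$ for all $f$. Reachable states: $\mathcal{R}(\sigma)=\{(P',\eta')\in\Sigma\mid\exists f\in\mathbb{F},\exists a',w':\sigma_e\to_f^*(P',\eta',a',w')\}$. RSM-map: a pair $(h,\epsilon)$ with $h:\Sigma\to[0,\infty)$ and real $\epsilon>0$ such that $h$ maps terminal states to $0$ and for every $\sigma=(P,\eta)$ with $h(\sigma)>0$: (i) if there is $\sigma'=(P',\eta')$ with $(P,\eta,1,\varepsilon)\to_f(P',\eta',1,\varepsilon)$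 for all $f$ (deterministic state), then $h(\sigma')+\epsilon\le h(\sigma)$; (ii) if $\sigma$ is nondeterministic with successors $\sigma_l=(P_l,\eta_l)$, $\sigma_r=(P_r,\eta_r)$ (for every $f$, $(P,\eta,1,\varepsilon)\to_f(P_l,\eta_l,1,L_n)$ or $\to_f(P_r,\eta_r,1,R_n)$), then $\max(h(\sigma_l),h(\sigma_r))+\epsilon\le h(\sigma)$; (iii) if $\sigma$ is probabilistic with probability value $p$ and successors $\sigma_l,\sigma_r$ (for all $f$, $(P,\eta,1,\varepsilon)\to_f(P_l,\eta_l,p,L_p)$ and $\to_f(P_r,\eta_r,1-p,R_p)$), then $p\,h(\sigma_l)+(1-p)h(\sigma_r)+\epsilon\le h(\sigma)$. *)

theory Defs
  imports Complex_Main "HOL-Library.Extended_Nonnegative_Real"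
begin

type_synonym var = nat
type_synonym valuation = "var \<Rightarrow> rat"

datatype aexp = AConst rat | AVar var | APlus aexp aexp | AMinus aexp aexp | ATimes aexp aexp

datatype bexp = BTrue | BFalse | BLe aexp aexp | BLt aexp aexp | BEq aexp aexp
  | BNot bexp | BAnd bexp bexp | BOr bexp bexp

fun aval :: "aexp \<Rightarrow> valuation \<Rightarrow> rat" where
  "aval (AConst c) \<eta> = c"
| "aval (AVar v) \<eta> = \<eta> v"
| "aval (APlus e1 e2) \<eta> = aval e1 \<eta> + aval e2 \<eta>"
| "aval (AMinus e1 e2) \<eta> = aval e1 \<eta> - aval e2 \<eta>"
| "aval (ATimes e1 e2) \<eta> = aval e1 \<eta> * aval e2 \<eta>"

fun bval :: "bexp \<Rightarrow> valuation \<Rightarrow> bool" where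
  "bval BTrue \<eta> = True"
| "bval BFalse \<eta> = False"
| "bval (BLe e1 e2) \<eta> = (aval e1 \<eta> \<le> aval e2 \<eta>)"
| "bval (BLt e1 e2) \<eta> = (aval e1 \<eta> < aval e2 \<eta>)"
| "bval (BEq e1 e2) \<eta> = (aval e1 \<eta> = aval e2 \<eta>)"
| "bval (BNot b) \<eta> = (\<not> bval b \<eta>)"
| "bval (BAnd b1 b2) \<eta> = (bval b1 \<eta> \<and> bval b2 \<eta>)"
| "bval (BOr b1 b2) \<eta> = (bval b1 \<eta> \<or> bval b2 \<eta>)"

text \<open>pGCL programs: Bot is the empty program.\<close>
datatype prog = Bot | Assign var aexp | Seq prog prog | PChoice prog aexp prog
  | NChoice prog prog | While bexp prog

datatype dir = Ln | Rn | Lp | Rp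

type_synonym sched = "dir list \<Rightarrow> dir"
type_synonym pstate = "prog \<times> valuation"
type_synonym estate = "prog \<times> valuation \<times> rat \<times> dir list"

definition schedulers :: "sched set" where
  "schedulers = {f. \<forall>w. f w \<in> {Ln, Rn}}"

inductive step :: "sched \<Rightarrow> estate \<Rightarrow> estate \<Rightarrow> bool" for f where
  assign: "step f (Assign v e, \<eta>, a, w) (Bot, \<eta>(v := aval e \<eta>), a, w)"
| seq: "step f (P1, \<eta>, a, w) (P1', \<eta>', a', w') \<Longrightarrow>
        step f (Seq P1 P2, \<eta>, a, w) (Seq P1' P2, \<eta>', a', w')"
| seq_bot: "step f (Seq Bot P2, \<eta>, a, w) (P2, \<eta>, a, w)"
| prob_le0: "aval p \<eta> \<le> 0 \<Longrightarrow> step f (PChoice P1 p P2, \<eta>, a, w) (P2, \<eta>, a, w @ [Rp])"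
| prob_ge1: "aval p \<eta> \<ge> 1 \<Longrightarrow> step f (PChoice P1 p P2, \<eta>, a, w) (P1, \<eta>, a, w @ [Lp])"
| prob_L: "0 < aval p \<eta> \<Longrightarrow> aval p \<eta> < 1 \<Longrightarrow>
        step f (PChoice P1 p P2, \<eta>, a, w) (P1, \<eta>, a * aval p \<eta>, w @ [Lp])"
| prob_R: "0 < aval p \<eta> \<Longrightarrow> aval p \<eta> < 1 \<Longrightarrow>
        step f (PChoice P1 p P2, \<eta>, a, w) (P2, \<eta>, a * (1 - aval p \<eta>), w @ [Rp])"
| nd_L: "f w = Ln \<Longrightarrow> step f (NChoice P1 P2, \<eta>, a, w) (P1, \<eta>, a, w @ [Ln])"
| nd_R: "f w = Rn \<Longrightarrow> step f (NChoice P1 P2, \<eta>, a, w) (P2, \<eta>, a, w @ [Rn])"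
| while_T: "bval b \<eta> \<Longrightarrow> step f (While b P, \<eta>, a, w) (Seq P (While b P), \<eta>, a, w)"
| while_F: "\<not> bval b \<eta> \<Longrightarrow> step f (While b P, \<eta>, a, w) (Bot, \<eta>, a, w)"

fun steps :: "sched \<Rightarrow> nat \<Rightarrow> estate \<Rightarrow> estate \<Rightarrow> bool" where
  "steps f 0 s t = (s = t)"
| "steps f (Suc n) s t = (\<exists>u. step f s u \<and> steps f n u t)"

definition init :: "pstate \<Rightarrow> estate" where
  "init \<sigma> = (fst \<sigma>, snd \<sigma>, 1, [])"

definition eta0 :: valuation where "eta0 = (\<lambda>_. 0)"

definition terminal_e :: "estate \<Rightarrow> bool" where
  "terminal_e s \<longleftrightarrow> fst s = Bot"

definition terminal :: "pstate \<Rightarrow> bool" where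
  "terminal \<sigma> \<longleftrightarrow> fst \<sigma> = Bot"

definition Prob :: "estate \<Rightarrow> rat" where
  "Prob s = fst (snd (snd s))"

definition T_le :: "nat \<Rightarrow> pstate \<Rightarrow> sched \<Rightarrow> estate set" where
  "T_le k \<sigma> f = {\<tau>. terminal_e \<tau> \<and> (\<exists>n. 1 \<le> n \<and> n \<le> k \<and> steps f n (init \<sigma>) \<tau>)}"

definition ExpRuntime :: "pstate \<Rightarrow> sched \<Rightarrow> ennreal" where
  "ExpRuntime \<sigma> f = (\<Sum>k. ennreal (real_of_rat (1 - (\<Sum>\<tau>\<in>T_le k \<sigma> f. Prob \<tau>))))"

definition PAST :: "prog set" where
  "PAST = {P. \<forall>f\<in>schedulers. ExpRuntime (P, eta0) f < \<infinity>}"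

definition Reach :: "pstate \<Rightarrow> pstate set" where
  "Reach \<sigma> = {\<sigma>'. \<exists>f\<in>schedulers. \<exists>a' w' n. 1 \<le> n \<and>
      steps f n (init \<sigma>) (fst \<sigma>', snd \<sigma>', a', w')}"

text \<open>A deterministic state has a unique, scheduler-independent successor with probability 1;
  we ignore the trace word recorded (this also covers p \<le> 0 / p \<ge> 1 probabilistic choices).\<close>
definition det_succ :: "pstate \<Rightarrow> pstate \<Rightarrow> bool" where
  "det_succ \<sigma> \<sigma>' \<longleftrightarrow> (\<forall>f\<in>schedulers. \<exists>w'.
      step f (init \<sigma>) (fst \<sigma>', snd \<sigma>', 1, w'))"

definition nondet_succ :: "pstate \<Rightarrow> pstate \<Rightarrow> pstate \<Rightarrow> bool" where
  "nondet_succ \<sigma> \<sigma>l \<sigma>r \<longleftrightarrow> (\<forall>f\<in>schedulers.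
      step f (init \<sigma>) (fst \<sigma>l, snd \<sigma>l, 1, [Ln]) \<or> step f (init \<sigma>) (fst \<sigma>r, snd \<sigma>r, 1, [Rn]))"

definition prob_succ :: "pstate \<Rightarrow> rat \<Rightarrow> pstate \<Rightarrow> pstate \<Rightarrow> bool" where
  "prob_succ \<sigma> p \<sigma>l \<sigma>r \<longleftrightarrow> (\<forall>f\<in>schedulers.
      step f (init \<sigma>) (fst \<sigma>l, snd \<sigma>l, p, [Lp]) \<and> step f (init \<sigma>) (fst \<sigma>r, snd \<sigma>r, 1 - p, [Rp]))"

definition RSM_map :: "(pstate \<Rightarrow> real) \<Rightarrow> real \<Rightarrow> bool" where
  "RSM_map h \<epsilon> \<longleftrightarrow> \<epsilon> > 0 \<and> (\<forall>\<sigma>. h \<sigma> \<ge> 0) \<and> (\<forall>\<sigma>. terminal \<sigma> \<longrightarrow> h \<sigma> = 0) \<and>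
     (\<forall>\<sigma>. h \<sigma> > 0 \<longrightarrow>
        (\<forall>\<sigma>'. det_succ \<sigma> \<sigma>' \<longrightarrow> h \<sigma>' + \<epsilon> \<le> h \<sigma>) \<and>
        (\<forall>\<sigma>l \<sigma>r. nondet_succ \<sigma> \<sigma>l \<sigma>r \<longrightarrow> max (h \<sigma>l) (h \<sigma>r) + \<epsilon> \<le> h \<sigma>) \<and>
        (\<forall>p \<sigma>l \<sigma>r. prob_succ \<sigma> p \<sigma>l \<sigma>r \<longrightarrow>
            real_of_rat p * h \<sigma>l + (1 - real_of_rat p) * h \<sigma>r + \<epsilon> \<le> h \<sigma>))"

text \<open>Ordinals are represented by well-orders (on nat: countable ordinals suffice,
  since all program states form a countable set).\<close>
definition ord_zero :: "nat rel \<Rightarrow> nat" where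
  "ord_zero r = (THE x. x \<in> Field r \<and> (\<forall>y\<in>Field r. (x, y) \<in> r))"

definition ord_less :: "nat rel \<Rightarrow> nat \<Rightarrow> nat \<Rightarrow> bool" where
  "ord_less r x y \<longleftrightarrow> (x, y) \<in> r \<and> x \<noteq> y"

end

theory Submission
  imports Defs
begin

fun is_nd :: "prog \<Rightarrow> bool" where
  "is_nd (NChoice P1 P2) = True"
| "is_nd (Seq P1 P2) = (P1 \<noteq> Bot \<and> is_nd P1)"
| "is_nd _ = False"

fun sl :: "dir \<Rightarrow> prog \<Rightarrow> valuation \<Rightarrow> (prog \<times> valuation \<times> rat \<times> dir list) list" where
  "sl d Bot \<eta> = []"
| "sl d (Assign v e) \<eta> = [(Bot, \<eta>(v := aval e \<eta>), 1, [])]"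
| "sl d (Seq P1 P2) \<eta> = (if P1 = Bot then [(P2, \<eta>, 1, [])]
     else map (\<lambda>(P', \<eta>', m, ds). (Seq P' P2, \<eta>', m, ds)) (sl d P1 \<eta>))"
| "sl d (PChoice P1 p P2) \<eta> = (if aval p \<eta> \<le> 0 then [(P2, \<eta>, 1, [Rp])]
     else if 1 \<le> aval p \<eta> then [(P1, \<eta>, 1, [Lp])]
     else [(P1, \<eta>, aval p \<eta>, [Lp]), (P2, \<eta>, 1 - aval p \<eta>, [Rp])])"
| "sl d (NChoice P1 P2) \<eta> = (if d = Ln then [(P1, \<eta>, 1, [Ln])]
     else if d = Rn then [(P2, \<eta>, 1, [Rn])] else [])"
| "sl d (While b P) \<eta> = (if bval b \<eta> then [(Seq P (While b P), \<eta>, 1, [])] else [(Bot, \<eta>, 1, [])])"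

definition trace :: "estate \<Rightarrow> dir list" where "trace s = snd (snd (snd s))"
definition st :: "estate \<Rightarrow> pstate" where "st s = (fst s, fst (snd s))"

definition esl :: "sched \<Rightarrow> estate \<Rightarrow> estate list" where
  "esl f s = map (\<lambda>(P', \<eta>', m, ds). (P', \<eta>', Prob s * m, trace s @ ds))
     (sl (f (trace s)) (fst s) (fst (snd s)))"

lemma step_esl: "step f s u \<Longrightarrow> u \<in> set (esl f s)"
proof (induction rule: step.induct)
  case (seq P1 \<eta> a w P1' \<eta>' a' w' P2)
  then have "P1 \<noteq> Bot" by (auto simp: esl_def)
  with seq show ?case by (force simp: esl_def trace_def Prob_def)
qed (auto simp: esl_def trace_def Prob_def)

lemma esl_step: "u \<in> set (esl f (P, \<eta>, a, w)) \<Longrightarrow> step f (P, \<eta>, a, w) u"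
proof (induction P arbitrary: u)
  case (Seq P1 P2)
  show ?case
  proof (cases "P1 = Bot")
    case True then show ?thesis using Seq.prems by (auto simp: esl_def trace_def Prob_def intro: step.intros)
  next
    case False
    then obtain P' \<eta>' m ds where e: "(P', \<eta>', m, ds) \<in> set (sl (f w) P1 \<eta>)"
      and u: "u = (Seq P' P2, \<eta>', a * m, w @ ds)"
      using Seq.prems by (auto simp: esl_def trace_def Prob_def)
    have "step f (P1, \<eta>, a, w) (P', \<eta>', a * m, w @ ds)"
      using Seq.IH(1)[of "(P', \<eta>', a * m, w @ ds)"] e by (force simp: esl_def trace_def Prob_def)
    then show ?thesis unfolding u by (rule step.seq)
  qed
next
  case (PChoice P1 p P2)
  then show ?case by (auto simp: esl_def trace_def Prob_def split: if_splits intro: step.intros)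
next
  case (NChoice P1 P2)
  then show ?case by (auto simp: esl_def trace_def Prob_def split: if_splits intro: step.intros)
next
  case (While b P)
  then show ?case by (auto simp: esl_def trace_def Prob_def split: if_splits intro: step.intros)
qed (auto simp: esl_def trace_def Prob_def intro: step.intros)

lemma step_iff: "step f s u \<longleftrightarrow> u \<in> set (esl f s)"
  using step_esl[of f s u] esl_step[of u f "fst s" "fst (snd s)" "fst (snd (snd s))" "snd (snd (snd s))"] by auto

definition shape :: "(prog \<times> valuation \<times> rat \<times> dir list) list \<Rightarrow> bool" where
  "shape xs \<longleftrightarrow> xs = [] \<or> (\<exists>x ds. xs = [(fst x, snd x, 1, ds)]) \<or>
     (\<exists>x y q. 0 < q \<and> q < 1 \<and> xs = [(fst x, snd x, q, [Lp]), (fst y, snd y, 1 - q, [Rp])])"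

lemma shape_map: "shape xs \<Longrightarrow> shape (map (\<lambda>(P', \<eta>', m, ds). (Seq P' P2, \<eta>', m, ds)) xs)"
  unfolding shape_def
  apply (elim disjE exE conjE)
    apply simp
   apply (rule disjI2, rule disjI1)
   apply (rule_tac x="(Seq (fst x) P2, snd x)" in exI) apply auto[1]
  apply (rule disjI2, rule disjI2)
  apply (rule_tac x="(Seq (fst x) P2, snd x)" in exI)
  apply (rule_tac x="(Seq (fst y) P2, snd y)" in exI)
  apply auto
  done

lemma sl_shape: "shape (sl d P \<eta>)"
proof (induction P)
  case (Seq P1 P2) then show ?case
    by (auto intro: shape_map) (auto simp: shape_def)
next
  case (PChoice P1 p P2) then show ?case
    by (simp add: shape_def)
next
  case (NChoice P1 P2) then show ?case
    by (simp add: shape_def)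
qed (auto simp: shape_def)

lemma sl_pos: "e \<in> set (sl d P \<eta>) \<Longrightarrow> 0 < fst (snd (snd e))"
  using sl_shape[of d P \<eta>] unfolding shape_def by auto

lemma sl_one: "(x, y, 1, ds) \<in> set (sl d P \<eta>) \<Longrightarrow> sl d P \<eta> = [(x, y, 1, ds)]"
  using sl_shape[of d P \<eta>] unfolding shape_def by auto

lemma sl_sum_le1: "sum_list (map (\<lambda>e. fst (snd (snd e))) (sl d P \<eta>)) \<le> 1"
  using sl_shape[of d P \<eta>] unfolding shape_def by auto

lemma sl_indep: "\<not> is_nd P \<Longrightarrow> sl d P \<eta> = sl d' P \<eta>"
  by (induction P) auto

lemma nd_sl: "is_nd P \<Longrightarrow> \<exists>l r. \<forall>d. sl d P \<eta> = (if d = Ln then [(fst l, snd l, 1, [Ln])]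
    else if d = Rn then [(fst r, snd r, 1, [Rn])] else [])"
proof (induction P)
  case (Seq P1 P2)
  from Seq.prems have "is_nd P1" "P1 \<noteq> Bot" by auto
  then obtain l r where lr: "\<forall>d. sl d P1 \<eta> = (if d = Ln then [(fst l, snd l, 1, [Ln])]
    else if d = Rn then [(fst r, snd r, 1, [Rn])] else [])" using Seq.IH(1) by blast
  show ?case
    apply (rule exI[of _ "(Seq (fst l) P2, snd l)"], rule exI[of _ "(Seq (fst r) P2, snd r)"])
    using Seq.prems lr by auto
next
  case (NChoice P1 P2) then show ?case
    by (intro exI[of _ "(P1, \<eta>)"] exI[of _ "(P2, \<eta>)"]) auto
qed auto

lemma notnd_ds: "\<not> is_nd P \<Longrightarrow> e \<in> set (sl d P \<eta>) \<Longrightarrow> snd (snd (snd e)) \<in> {[], [Lp], [Rp]}"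
  by (induction P arbitrary: e) (force split: if_splits)+

lemma sl_Ln_ds: "(x, y, m, [Ln]) \<in> set (sl d P \<eta>) \<Longrightarrow> is_nd P \<and> d = Ln"
proof -
  assume a: "(x, y, m, [Ln]) \<in> set (sl d P \<eta>)"
  then have "is_nd P" using notnd_ds[of P "(x, y, m, [Ln])"] by auto
  then obtain l r where "\<forall>d. sl d P \<eta> = (if d = Ln then [(fst l, snd l, 1, [Ln])]
    else if d = Rn then [(fst r, snd r, 1, [Rn])] else [])" using nd_sl by blast
  with a `is_nd P` show ?thesis by (auto split: if_splits)
qed

lemma sl_Rn_ds: "(x, y, m, [Rn]) \<in> set (sl d P \<eta>) \<Longrightarrow> is_nd P \<and> d = Rn"
proof -
  assume a: "(x, y, m, [Rn]) \<in> set (sl d P \<eta>)"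
  then have "is_nd P" using notnd_ds[of P "(x, y, m, [Rn])"] by auto
  then obtain l r where "\<forall>d. sl d P \<eta> = (if d = Ln then [(fst l, snd l, 1, [Ln])]
    else if d = Rn then [(fst r, snd r, 1, [Rn])] else [])" using nd_sl by blast
  with a `is_nd P` show ?thesis by (auto split: if_splits)
qed

lemma sl_Lp_ds: "(x, y, m, [Lp]) \<in> set (sl d P \<eta>) \<Longrightarrow> \<not> is_nd P"
proof
  assume a: "(x, y, m, [Lp]) \<in> set (sl d P \<eta>)" and "is_nd P"
  then obtain l r where "\<forall>d. sl d P \<eta> = (if d = Ln then [(fst l, snd l, 1, [Ln])]
    else if d = Rn then [(fst r, snd r, 1, [Rn])] else [])" using nd_sl by blast
  with a show False by (auto split: if_splits)
qed

section \<open>Value iteration\<close>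

definition val :: "dir \<Rightarrow> (pstate \<Rightarrow> real) \<Rightarrow> pstate \<Rightarrow> real" where
  "val d G x = sum_list (map (\<lambda>(P', \<eta>', m, ds). real_of_rat m * G (P', \<eta>')) (sl d (fst x) (snd x)))"

definition op :: "(pstate \<Rightarrow> real) \<Rightarrow> pstate \<Rightarrow> real" where
  "op G x = (if is_nd (fst x) then max (val Ln G x) (val Rn G x) else val Ln G x)"

primrec W :: "nat \<Rightarrow> pstate set \<Rightarrow> pstate \<Rightarrow> real" where
  "W 0 B x = 0"
| "W (Suc n) B x = (if x \<in> B then 0 else 1 + op (W n B) x)"

definition SRel :: "pstate rel" where
  "SRel = {(x, y). \<exists>d m ds. (fst y, snd y, m, ds) \<in> set (sl d (fst x) (snd x))}"

lemma val_mono: "(\<And>y. (x, y) \<in> SRel \<Longrightarrow> G y \<le> H y) \<Longrightarrow> val d G x \<le> val d H x"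
  unfolding val_def
  apply (rule sum_list_mono)
  apply (clarsimp)
  subgoal for P' \<eta>' m ds
    using sl_pos[of "(P', \<eta>', m, ds)" d "fst x" "snd x"]
    apply (intro mult_left_mono)
    subgoal by (force simp: SRel_def)
    subgoal by simp
    done
  done

lemma val_nonneg: "(\<And>y. (x, y) \<in> SRel \<Longrightarrow> 0 \<le> G y) \<Longrightarrow> 0 \<le> val d G x"
  unfolding val_def
  apply (rule sum_list_nonneg)
  apply (clarsimp)
  subgoal for P' \<eta>' m ds
    using sl_pos[of "(P', \<eta>', m, ds)" d "fst x" "snd x"]
    apply (intro mult_nonneg_nonneg)
    subgoal by simp
    subgoal by (force simp: SRel_def)
    done
  done

lemma op_mono: "(\<And>y. (x, y) \<in> SRel \<Longrightarrow> G y \<le> H y) \<Longrightarrow> op G x \<le> op H x"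
proof -
  assume a: "\<And>y. (x, y) \<in> SRel \<Longrightarrow> G y \<le> H y"
  have "val Ln G x \<le> val Ln H x" "val Rn G x \<le> val Rn H x" using val_mono[of x G H, OF a] by blast+
  then show ?thesis unfolding op_def by (auto simp: le_max_iff_disj)
qed

lemma op_nonneg: "(\<And>y. (x, y) \<in> SRel \<Longrightarrow> 0 \<le> G y) \<Longrightarrow> 0 \<le> op G x"
  unfolding op_def using val_nonneg[of x G] by (auto simp: le_max_iff_disj)

lemma val_le_op: "d = Ln \<or> d = Rn \<Longrightarrow> val d G x \<le> op G x"
  unfolding op_def using sl_indep[of "fst x" d "snd x" Ln] by (auto simp: val_def)

lemma my_member_le_sum_list:
  fixes xs :: "real list"
  shows "x \<in> set xs \<Longrightarrow> (\<And>y. y \<in> set xs \<Longrightarrow> 0 \<le> y) \<Longrightarrow> x \<le> sum_list xs"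
proof (induction xs)
  case (Cons a xs)
  then show ?case
    by (cases "a = x") (auto intro: add_increasing add_increasing2 sum_list_nonneg)
qed simp

lemma op_ge_succ:
  assumes "(x, y) \<in> SRel"
  shows "\<exists>c>0. \<forall>G. (\<forall>z. 0 \<le> G z) \<longrightarrow> c * G y \<le> op G x"
proof -
  obtain d m ds where e: "(fst y, snd y, m, ds) \<in> set (sl d (fst x) (snd x))"
    using assms by (auto simp: SRel_def)
  have m0: "0 < m" using sl_pos[OF e] by simp
  show ?thesis
  proof (cases "is_nd (fst x)")
    case True
    then obtain l r where lr: "\<forall>d. sl d (fst x) (snd x) = (if d = Ln then [(fst l, snd l, 1, [Ln])]
      else if d = Rn then [(fst r, snd r, 1, [Rn])] else [])" using nd_sl by blast
    show ?thesis
    proof (rule exI[of _ 1], intro conjI allI impI)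
      fix G :: "pstate \<Rightarrow> real" assume "\<forall>z. 0 \<le> G z"
      have "y = l \<or> y = r" using e lr by (auto split: if_splits simp: prod_eq_iff)
      then show "1 * G y \<le> op G x" using True lr by (auto simp: op_def val_def)
    qed simp
  next
    case False
    have e': "(fst y, snd y, m, ds) \<in> set (sl Ln (fst x) (snd x))"
      using e sl_indep[OF False, of d "snd x" Ln] by simp
    show ?thesis
    proof (rule exI[of _ "real_of_rat m"], intro conjI allI impI)
      show "0 < real_of_rat m" using m0 by simp
      fix G :: "pstate \<Rightarrow> real" assume G: "\<forall>z. 0 \<le> G z"
      have "real_of_rat m * G y \<in> set (map (\<lambda>(P', \<eta>', m, ds). real_of_rat m * G (P', \<eta>')) (sl Ln (fst x) (snd x)))"
        using e' by (force)
      moreover have "\<And>z. z \<in> set (map (\<lambda>(P', \<eta>', m, ds). real_of_rat m * G (P', \<eta>')) (sl Ln (fst x) (snd x))) \<Longrightarrow> 0 \<le> z"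
        using G sl_pos[of _ Ln "fst x" "snd x"] by (force)
      ultimately have "real_of_rat m * G y \<le> val Ln G x"
        unfolding val_def by (rule my_member_le_sum_list)
      then show "real_of_rat m * G y \<le> op G x" using False by (simp add: op_def)
    qed
  qed
qed

lemma W_nonneg: "0 \<le> W n B x"
  by (induction n arbitrary: x) (auto intro!: op_nonneg add_nonneg_nonneg)

lemma W_Suc_mono: "W n B x \<le> W (Suc n) B x"
proof (induction n arbitrary: x)
  case 0 then show ?case using W_nonneg[of "Suc 0" B x] by simp
next
  case (Suc n) then show ?case by (auto intro!: op_mono)
qed

lemma W_incseq: "incseq (\<lambda>n. W n B x)"
  by (rule incseq_SucI) (rule W_Suc_mono)

lemma W_mono: "n \<le> m \<Longrightarrow> W n B x \<le> W m B x"
  using W_incseq[of B x] by (auto simp: incseq_def)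

lemma W_anti: "B \<subseteq> B' \<Longrightarrow> W n B' x \<le> W n B x"
  by (induction n arbitrary: x) (auto intro!: op_mono W_nonneg op_nonneg add_nonneg_nonneg)

lemma W_inB: "x \<in> B \<Longrightarrow> W n B x = 0"
  by (cases n) auto

lemma W_one: "x \<notin> B \<Longrightarrow> W 1 B x = 1"
  by (simp add: op_def val_def split_def)

definition fin :: "pstate set \<Rightarrow> pstate \<Rightarrow> bool" where
  "fin B x \<longleftrightarrow> bdd_above (range (\<lambda>n. W n B x))"

definition V :: "pstate set \<Rightarrow> pstate \<Rightarrow> real" where
  "V B x = (SUP n. W n B x)"

lemma V_ge: "fin B x \<Longrightarrow> W n B x \<le> V B x"
  unfolding fin_def V_def by (rule cSUP_upper) auto

lemma V_lim: "fin B x \<Longrightarrow> (\<lambda>n. W n B x) \<longlonglongrightarrow> V B x"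
  unfolding fin_def V_def by (rule LIMSEQ_incseq_SUP[OF _ W_incseq])

lemma fin_inB: "x \<in> B \<Longrightarrow> fin B x"
  by (simp add: fin_def W_inB)

lemma V_inB: "x \<in> B \<Longrightarrow> V B x = 0"
  by (simp add: V_def W_inB)

lemma V_nonneg: "fin B x \<Longrightarrow> 0 \<le> V B x"
  using V_ge[of B x 0] by simp

lemma V_pos: "fin B x \<Longrightarrow> x \<notin> B \<Longrightarrow> 1 \<le> V B x"
  using V_ge[of B x 1] W_one[of x B] by simp

lemma fin_anti: "B \<subseteq> B' \<Longrightarrow> fin B x \<Longrightarrow> fin B' x"
proof -
  assume a: "B \<subseteq> B'" "fin B x"
  then obtain M where M: "\<And>n. W n B x \<le> M" by (auto simp: fin_def bdd_above_def)
  show ?thesis unfolding fin_def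
    by (rule bdd_aboveI2[where M=M]) (meson M W_anti a(1) order_trans)
qed

lemma fin_succ:
  assumes "x \<notin> B" "fin B x" "(x, y) \<in> SRel"
  shows "fin B y"
proof -
  obtain c where c: "c > 0" "\<And>G. (\<forall>z. 0 \<le> G z) \<Longrightarrow> c * G y \<le> op G x"
    using op_ge_succ[OF assms(3)] by blast
  have "W n B y \<le> V B x / c" for n
  proof -
    have "c * W n B y \<le> op (W n B) x" using c(2)[of "W n B"] W_nonneg by blast
    also have "\<dots> \<le> W (Suc n) B x" using assms(1) by simp
    also have "\<dots> \<le> V B x" using V_ge[OF assms(2)] .
    finally show ?thesis using c(1) by (simp add: field_simps)
  qed
  then show ?thesis unfolding fin_def by (intro bdd_aboveI2) auto
qed

lemma tendsto_sum_list_map: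
  fixes F :: "nat \<Rightarrow> 'a \<Rightarrow> real"
  shows "(\<And>e. e \<in> set xs \<Longrightarrow> (\<lambda>n. F n e) \<longlonglongrightarrow> G e) \<Longrightarrow>
    (\<lambda>n. sum_list (map (F n) xs)) \<longlonglongrightarrow> sum_list (map G xs)"
  by (induction xs) (auto intro!: tendsto_add)

lemma val_lim:
  assumes "\<And>y. (x, y) \<in> SRel \<Longrightarrow> fin B y"
  shows "(\<lambda>n. val d (W n B) x) \<longlonglongrightarrow> val d (V B) x"
  unfolding val_def
proof (rule tendsto_sum_list_map)
  fix e assume e: "e \<in> set (sl d (fst x) (snd x))"
  obtain P' \<eta>' m ds where ee: "e = (P', \<eta>', m, ds)" by (cases e) auto
  have "(x, (P', \<eta>')) \<in> SRel" using e ee by (force simp: SRel_def)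
  then have "fin B (P', \<eta>')" by (rule assms)
  then show "(\<lambda>n. case e of (P', \<eta>', m, ds) \<Rightarrow> real_of_rat m * W n B (P', \<eta>')) \<longlonglongrightarrow>
         (case e of (P', \<eta>', m, ds) \<Rightarrow> real_of_rat m * V B (P', \<eta>'))"
    unfolding ee by (auto intro!: tendsto_mult_left V_lim)
qed

lemma op_lim:
  assumes "\<And>y. (x, y) \<in> SRel \<Longrightarrow> fin B y"
  shows "(\<lambda>n. op (W n B) x) \<longlonglongrightarrow> op (V B) x"
  unfolding op_def using val_lim[of x B Ln, OF assms] val_lim[of x B Rn, OF assms]
  by (auto intro: tendsto_max)

lemma bellman:
  assumes "x \<notin> B" "fin B x" "\<And>y. (x, y) \<in> SRel \<Longrightarrow> fin B y"
  shows "1 + op (V B) x \<le> V B x"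
proof -
  have lim: "(\<lambda>n. op (W n B) x) \<longlonglongrightarrow> op (V B) x" by (rule op_lim) (rule assms(3))
  have "op (W n B) x \<le> V B x - 1" for n
  proof -
    have "1 + op (W n B) x = W (Suc n) B x" using assms(1) by simp
    also have "\<dots> \<le> V B x" by (rule V_ge[OF assms(2)])
    finally show ?thesis by simp
  qed
  then have "op (V B) x \<le> V B x - 1" using LIMSEQ_le_const2[OF lim] by blast
  then show ?thesis by simp
qed

definition F :: "pstate set \<Rightarrow> pstate set" where
  "F B = B \<union> {x. fin B x}"

definition B0 :: "pstate set" where
  "B0 = {x. fst x = Bot}"

definition sclosed :: "pstate set \<Rightarrow> bool" where
  "sclosed X \<longleftrightarrow> (\<forall>x y. x \<in> X \<longrightarrow> (x, y) \<in> SRel \<longrightarrow> y \<in> X)"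

inductive_set tower :: "pstate set set" where
  base: "B0 \<in> tower"
| succ: "X \<in> tower \<Longrightarrow> F X \<in> tower"
| union: "C \<in> Pow tower \<Longrightarrow> C \<noteq> {} \<Longrightarrow> \<Union>C \<in> tower"

lemma F_mono: "X \<subseteq> Y \<Longrightarrow> F X \<subseteq> F Y"
  unfolding F_def using fin_anti by blast

lemma F_infl: "X \<subseteq> F X"
  unfolding F_def by blast

lemma tower_B0: "X \<in> tower \<Longrightarrow> B0 \<subseteq> X"
  by (induction rule: tower.induct) (auto simp: F_def)

definition extreme :: "pstate set \<Rightarrow> bool" where
  "extreme X \<longleftrightarrow> (\<forall>Y\<in>tower. Y \<subset> X \<longrightarrow> F Y \<subseteq> X)"

lemma lemA:
  assumes X: "X \<in> tower" "extreme X" and Y: "Y \<in> tower"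
  shows "Y \<subseteq> X \<or> F X \<subseteq> Y"
  using Y
proof (induction rule: tower.induct)
  case base then show ?case using tower_B0[OF X(1)] by blast
next
  case (succ Z)
  show ?case
  proof (cases "Z \<subset> X")
    case True then show ?thesis using X(2) succ(1) unfolding extreme_def by blast
  next
    case False
    with succ.IH have "Z = X \<or> F X \<subseteq> Z" by blast
    then show ?thesis using F_infl[of Z] by blast
  qed
next
  case (union C)
  then have "\<forall>Z\<in>C. Z \<subseteq> X \<or> F X \<subseteq> Z" by blast
  then show ?case by blast
qed

lemma lemB: "X \<in> tower \<Longrightarrow> extreme X"
proof (induction rule: tower.induct)
  case base
  then show ?case unfolding extreme_def using tower_B0 by blast
next
  case (succ Z)
  show ?case unfolding extreme_def
  proof (intro ballI impI)
    fix Y assume Y: "Y \<in> tower" "Y \<subset> F Z"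
    from lemA[OF succ(1) succ(2) Y(1)] Y(2) have "Y \<subseteq> Z" by blast
    then show "F Y \<subseteq> F Z"
    proof (cases "Y = Z")
      case False
      with `Y \<subseteq> Z` have "F Y \<subseteq> Z" using succ(2) Y(1) unfolding extreme_def by blast
      then show ?thesis using F_infl[of Z] by blast
    qed simp
  qed
next
  case (union C)
  have Ct: "\<And>Z. Z \<in> C \<Longrightarrow> Z \<in> tower \<and> extreme Z" using union(1) by blast
  show ?case unfolding extreme_def
  proof (intro ballI impI)
    fix Y assume Y: "Y \<in> tower" "Y \<subset> \<Union>C"
    have "\<exists>Z\<in>C. Y \<subseteq> Z"
    proof (rule ccontr)
      assume nt: "\<not> ?thesis"
      have "\<forall>Z\<in>C. F Z \<subseteq> Y"
      proof (intro ballI)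
        fix Z assume "Z \<in> C"
        then show "F Z \<subseteq> Y" using lemA[of Z Y] Ct[of Z] Y(1) nt by blast
      qed
      then have "\<Union>C \<subseteq> Y" using F_infl by blast
      with Y(2) show False by blast
    qed
    then obtain Z where Z: "Z \<in> C" "Y \<subseteq> Z" by blast
    show "F Y \<subseteq> \<Union>C"
    proof (cases "Y = Z")
      case False
      then have "F Y \<subseteq> Z" using Z Ct Y(1) unfolding extreme_def by blast
      then show ?thesis using Z(1) by blast
    next
      case True
      from Y(2) obtain Z' where Z': "Z' \<in> C" "\<not> Z' \<subseteq> Y" by blast
      have "Z' \<subseteq> Z \<or> F Z \<subseteq> Z'" using lemA[of Z Z'] Ct Z Z' by blast
      then have "F Z \<subseteq> Z'" using Z' True by blast
      then show ?thesis using True Z'(1) by blast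
    qed
  qed
qed

lemma tower_linear: "X \<in> tower \<Longrightarrow> Y \<in> tower \<Longrightarrow> X \<subseteq> Y \<or> Y \<subseteq> X"
proof -
  assume a: "X \<in> tower" "Y \<in> tower"
  have "Y \<subseteq> X \<or> F X \<subseteq> Y" by (rule lemA[OF a(1) lemB[OF a(1)] a(2)])
  then show ?thesis using F_infl[of X] by blast
qed

lemma tower_T2: "X \<in> tower \<Longrightarrow> Y \<in> tower \<Longrightarrow> X \<subset> Y \<Longrightarrow> F X \<subseteq> Y"
  using lemB[of Y] unfolding extreme_def by blast

lemma tower_fix: assumes "Y \<in> tower" "F Y \<subseteq> Y" "Z \<in> tower" shows "Z \<subseteq> Y"
  using assms(3)
proof (induction rule: tower.induct)
  case base then show ?case using tower_B0[OF assms(1)] .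
next
  case (succ X) then show ?case using F_mono[of X Y] assms(2) by blast
next
  case (union C) then show ?case by blast
qed

definition Top :: "pstate set" where "Top = \<Union>tower"

lemma Top_tower: "Top \<in> tower"
  unfolding Top_def using tower.base by (intro tower.union) auto

lemma F_Top: "F Top = Top"
  using tower.succ[OF Top_tower] F_infl[of Top] unfolding Top_def by blast

lemma notTop_unfin: "x \<notin> Top \<Longrightarrow> \<not> fin Top x"
  using F_Top unfolding F_def by blast

lemma sclosed_B0: "sclosed B0"
  unfolding sclosed_def B0_def SRel_def by auto

lemma sclosed_F: assumes "sclosed X" shows "sclosed (F X)"
  unfolding sclosed_def
proof (intro allI impI)
  fix x y assume x: "x \<in> F X" and xy: "(x, y) \<in> SRel"
  show "y \<in> F X"
  proof (cases "x \<in> X")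
    case True then show ?thesis using assms xy unfolding sclosed_def F_def by blast
  next
    case False
    then have "fin X x" using x unfolding F_def by blast
    show ?thesis
    proof (cases "y \<in> X")
      case False
      then show ?thesis using fin_succ[OF `x \<notin> X` `fin X x` xy] unfolding F_def by blast
    qed (simp add: F_def)
  qed
qed

lemma tower_closed: "X \<in> tower \<Longrightarrow> sclosed X"
proof (induction rule: tower.induct)
  case base then show ?case by (rule sclosed_B0)
next
  case (succ X) then show ?case using sclosed_F by blast
next
  case (union C)
  then have "\<And>Z. Z \<in> C \<Longrightarrow> sclosed Z" by blast
  then show ?case unfolding sclosed_def by blast
qed

lemma sclosed_rtrancl: "sclosed X \<Longrightarrow> x \<in> X \<Longrightarrow> (x, y) \<in> SRel\<^sup>* \<Longrightarrow> y \<in> X"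
proof -
  assume c: "sclosed X" and x: "x \<in> X" and r: "(x, y) \<in> SRel\<^sup>*"
  from r x show "y \<in> X"
    by (induction rule: rtrancl_induct) (use c in \<open>auto simp: sclosed_def\<close>)
qed

lemma tower_wf:
  assumes "A \<subseteq> tower" "A \<noteq> {}"
  shows "\<exists>X\<in>A. \<forall>Y\<in>A. X \<subseteq> Y"
proof -
  define L where "L = \<Union>{Z\<in>tower. \<forall>Y\<in>A. Z \<subseteq> Y}"
  have B0in: "B0 \<in> {Z\<in>tower. \<forall>Y\<in>A. Z \<subseteq> Y}" using assms(1) tower_B0 tower.base by blast
  have Lt: "L \<in> tower" unfolding L_def using B0in by (intro tower.union) auto
  have Lle: "\<forall>Y\<in>A. L \<subseteq> Y" unfolding L_def by blast
  show ?thesis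
  proof (cases "L \<in> A")
    case True then show ?thesis using Lle by blast
  next
    case False
    then have "\<forall>Y\<in>A. L \<subset> Y" using Lle by blast
    then have "\<forall>Y\<in>A. F L \<subseteq> Y" using tower_T2[OF Lt] assms(1) by (meson subsetD)
    then have "F L \<in> {Z\<in>tower. \<forall>Y\<in>A. Z \<subseteq> Y}" using tower.succ[OF Lt] by blast
    then have FL: "F L \<subseteq> L" unfolding L_def by (rule Union_upper)
    obtain Y where "Y \<in> A" using assms(2) by blast
    then have "Y \<in> tower" using assms(1) by blast
    then have "Y \<subseteq> L" by (rule tower_fix[OF Lt FL])
    with `\<forall>Y\<in>A. L \<subset> Y` `Y \<in> A` show ?thesis by blast
  qed
qed

definition K :: "pstate \<Rightarrow> pstate set" where
  "K x = \<Union>{Z\<in>tower. x \<notin> Z}"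

lemma K_B0: "x \<in> B0 \<Longrightarrow> K x = {}"
  unfolding K_def using tower_B0 by blast

lemma B0_ne: "B0 \<noteq> {}"
  unfolding B0_def by auto

lemma K_nonB0:
  assumes "x \<notin> B0"
  shows "K x \<in> tower" "B0 \<subseteq> K x" "x \<notin> K x" "K x \<noteq> {}"
proof -
  have "B0 \<in> {Z\<in>tower. x \<notin> Z}" using assms tower.base by blast
  then show "K x \<in> tower" unfolding K_def by (intro tower.union) auto
  show "B0 \<subseteq> K x" using `B0 \<in> {Z\<in>tower. x \<notin> Z}` unfolding K_def by blast
  show "x \<notin> K x" unfolding K_def by blast
  show "K x \<noteq> {}" using `B0 \<subseteq> K x` B0_ne by blast
qed

lemma K_level:
  assumes "x \<in> Top" "x \<notin> B0"
  shows "x \<in> F (K x)"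
proof (rule ccontr)
  assume "x \<notin> F (K x)"
  have Kt: "K x \<in> tower" using K_nonB0[OF assms(2)] by simp
  then have "F (K x) \<in> {Z\<in>tower. x \<notin> Z}" using `x \<notin> F (K x)` tower.succ by blast
  then have "F (K x) \<subseteq> K x" unfolding K_def by blast
  then have "Top \<subseteq> K x" using tower_fix[OF Kt] Top_tower by blast
  then show False using assms(1) K_nonB0[OF assms(2)] by blast
qed

lemma K_less:
  assumes "Y \<in> tower"
  shows "x \<in> Y \<longleftrightarrow> K x \<subset> Y"
proof
  assume "x \<in> Y"
  have "K x \<subseteq> Y" unfolding K_def
  proof (rule Union_least)
    fix Z assume "Z \<in> {Z \<in> tower. x \<notin> Z}"
    then show "Z \<subseteq> Y" using tower_linear[of Z Y] assms `x \<in> Y` by blast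
  qed
  moreover have "x \<notin> K x" unfolding K_def by blast
  ultimately show "K x \<subset> Y" using `x \<in> Y` by blast
next
  assume "K x \<subset> Y"
  show "x \<in> Y"
  proof (rule ccontr)
    assume "x \<notin> Y"
    then have "Y \<subseteq> K x" unfolding K_def using assms by blast
    with `K x \<subset> Y` show False by blast
  qed
qed

lemma K_in: "K x \<in> insert {} tower"
proof (cases "x \<in> B0")
  case True then show ?thesis using K_B0 by simp
next
  case False then show ?thesis using K_nonB0 by simp
qed

primrec iter :: "('a \<Rightarrow> 'a list) \<Rightarrow> nat \<Rightarrow> 'a \<Rightarrow> 'a list" where
  "iter S 0 x = [x]"
| "iter S (Suc n) x = concat (map (iter S n) (S x))"

lemma concat_map_concat_aux:
  "concat (map (\<lambda>y. concat (map g (h y))) xs) = concat (map g (concat (map h xs)))"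
  by (induction xs) auto

lemma iter_add: "iter S (a + b) x = concat (map (iter S b) (iter S a x))"
proof (induction a arbitrary: x)
  case (Suc a)
  have e: "iter S (a + b) = (\<lambda>y. concat (map (iter S b) (iter S a y)))"
    by (rule ext) (rule Suc.IH)
  have "iter S (Suc a + b) x = concat (map (\<lambda>y. concat (map (iter S b) (iter S a y))) (S x))"
    by (simp add: e)
  also have "\<dots> = concat (map (iter S b) (iter S (Suc a) x))"
    by (simp add: concat_map_concat_aux)
  finally show ?case .
qed simp

lemma concat_singles: "concat (map (\<lambda>z. [z]) xs) = xs"
  by (induction xs) auto

lemma iter_zero_fun: "iter S 0 = (\<lambda>z. [z])"
  by auto

lemma iter_one: "iter S (Suc 0) x = S x"
  by (simp add: iter_zero_fun concat_singles)

lemma iter_Suc_last: "iter S (Suc n) x = concat (map S (iter S n x))"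
proof -
  have e: "iter S (Suc 0) = S" by (rule ext) (rule iter_one)
  show ?thesis using iter_add[of S n "Suc 0" x] by (simp add: e)
qed

lemma iter_mem_add: "y \<in> set (iter S a x) \<Longrightarrow> z \<in> set (iter S b y) \<Longrightarrow> z \<in> set (iter S (a + b) x)"
  unfolding iter_add by auto

lemma steps_iter: "steps f n s t \<Longrightarrow> t \<in> set (iter (esl f) n s)"
proof (induction n arbitrary: s)
  case (Suc n)
  then obtain u where "step f s u" "steps f n u t" by auto
  then show ?case using Suc.IH[of u] by (auto simp: step_iff)
qed simp

lemma sum_list_filter_concat:
  "sum_list (map g (filter P (concat (map h xs)))) = sum_list (map (\<lambda>x. sum_list (map g (filter P (h x)))) xs)"
  by (induction xs) auto

lemma sum_list_concat_map:
  "sum_list (map g (concat (map h xs))) = sum_list (map (\<lambda>x. sum_list (map g (h x))) xs)"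
  by (induction xs) auto

lemma sum_list_split_filter:
  fixes g :: "'a \<Rightarrow> 'b::comm_monoid_add"
  shows "sum_list (map g xs) = sum_list (map g (filter P xs)) + sum_list (map g (filter (\<lambda>x. \<not> P x) xs))"
  by (induction xs) (auto simp: algebra_simps)

lemma sum_list_filter_mono:
  fixes g :: "'a \<Rightarrow> 'b::ordered_comm_monoid_add"
  assumes "\<And>x. x \<in> set xs \<Longrightarrow> 0 \<le> g x" "\<And>x. P x \<Longrightarrow> Q x"
  shows "sum_list (map g (filter P xs)) \<le> sum_list (map g (filter Q xs))"
  using assms by (induction xs) (auto intro: add_mono add_increasing)

lemma sum_set_le_sum_list:
  fixes g :: "'a \<Rightarrow> 'b::ordered_comm_monoid_add"
  assumes "\<And>x. x \<in> set xs \<Longrightarrow> 0 \<le> g x"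
  shows "sum g (set xs) \<le> sum_list (map g xs)"
  using assms
proof (induction xs)
  case (Cons a xs)
  have "sum g (set (a # xs)) \<le> g a + sum g (set xs)"
    by (cases "a \<in> set xs") (auto simp: sum.insert_if Cons.prems intro: add_increasing)
  also have "\<dots> \<le> g a + sum_list (map g xs)" using Cons by (auto intro: add_left_mono)
  finally show ?case by simp
qed simp

lemma sum_subset_le_sum_list:
  fixes g :: "'a \<Rightarrow> 'b::ordered_comm_monoid_add"
  assumes "A \<subseteq> set xs" "\<And>x. x \<in> set xs \<Longrightarrow> 0 \<le> g x"
  shows "sum g A \<le> sum_list (map g xs)"
proof -
  have "sum g A \<le> sum g (set xs)"
    using assms by (intro sum_mono2) auto
  also have "\<dots> \<le> sum_list (map g xs)" by (rule sum_set_le_sum_list) (rule assms(2))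
  finally show ?thesis .
qed

lemma of_rat_sum_list: "real_of_rat (sum_list (map g xs)) = sum_list (map (\<lambda>x. real_of_rat (g x)) xs)"
  by (induction xs) (auto simp: of_rat_add)

lemma sum_list_mult_left: "sum_list (map (\<lambda>x. (a::'b::semiring_0) * g x) xs) = a * sum_list (map g xs)"
  by (induction xs) (auto simp: algebra_simps)

lemma sum_lessThan_sum_list:
  "(\<Sum>j<m. sum_list (map (g j) xs)) = sum_list (map (\<lambda>x. \<Sum>j<m. g j x) xs)"
  by (induction xs) (auto simp: sum.distrib)

section \<open>Lower bound on the expected runtime\<close>

lemma esl_Prob: "u \<in> set (esl f s) \<Longrightarrow> \<exists>m>0. Prob u = Prob s * m"
  unfolding esl_def using sl_pos by (force simp: Prob_def)

lemma iter_Prob_nonneg: "0 \<le> Prob s \<Longrightarrow> t \<in> set (iter (esl f) n s) \<Longrightarrow> 0 \<le> Prob t"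
proof (induction n arbitrary: s)
  case (Suc n)
  then obtain u where u: "u \<in> set (esl f s)" "t \<in> set (iter (esl f) n u)" by auto
  from esl_Prob[OF u(1)] obtain m where "m > 0" "Prob u = Prob s * m" by blast
  then have "0 \<le> Prob u" using Suc.prems(1) by simp
  then show ?case using Suc.IH u(2) by blast
qed simp

lemma esl_mass: "0 \<le> Prob s \<Longrightarrow>
  sum_list (map Prob (esl f s)) \<le> (if terminal_e s then 0 else Prob s)"
proof -
  assume p: "0 \<le> Prob s"
  obtain P \<eta> a w where s: "s = (P, \<eta>, a, w)" by (cases s) auto
  have "sum_list (map Prob (esl f s)) = Prob s * sum_list (map (\<lambda>e. fst (snd (snd e))) (sl (f w) P \<eta>))"
    unfolding esl_def s by (simp add: Prob_def trace_def comp_def split_def sum_list_mult_left)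
  also have "\<dots> \<le> Prob s" using sl_sum_le1[of "f w" P \<eta>] p by (simp add: mult_left_le)
  finally show ?thesis using s by (auto simp: terminal_e_def esl_def)
qed

context
  fixes f :: sched and \<sigma> :: pstate
begin

definition LL :: "nat \<Rightarrow> estate list" where "LL n = iter (esl f) n (init \<sigma>)"
definition lm :: "nat \<Rightarrow> rat" where "lm n = sum_list (map Prob (filter (\<lambda>s. \<not> terminal_e s) (LL n)))"
definition tm :: "nat \<Rightarrow> rat" where "tm n = sum_list (map Prob (filter terminal_e (LL n)))"

lemma LL_nonneg: "s \<in> set (LL n) \<Longrightarrow> 0 \<le> Prob s"
  unfolding LL_def by (rule iter_Prob_nonneg) (auto simp: init_def Prob_def)

lemma lm_nonneg: "0 \<le> lm n"
  unfolding lm_def using LL_nonneg by (intro sum_list_nonneg) auto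

lemma tot_Suc: "sum_list (map Prob (LL (Suc n))) \<le> lm n"
proof -
  have "sum_list (map Prob (LL (Suc n))) = sum_list (map (\<lambda>s. sum_list (map Prob (esl f s))) (LL n))"
    unfolding LL_def iter_Suc_last sum_list_concat_map ..
  also have "\<dots> \<le> sum_list (map (\<lambda>s. if terminal_e s then 0 else Prob s) (LL n))"
    using LL_nonneg esl_mass by (intro sum_list_mono) auto
  also have "\<dots> = lm n" unfolding lm_def sum_list_map_filter' by (intro arg_cong[where f=sum_list] map_cong) auto
  finally show ?thesis .
qed

lemma tm_le: "tm (Suc n) \<le> lm n - lm (Suc n)"
proof -
  have "sum_list (map Prob (LL (Suc n))) = tm (Suc n) + lm (Suc n)"
    unfolding tm_def lm_def by (rule sum_list_split_filter)
  then show ?thesis using tot_Suc[of n] by simp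
qed

lemma tm_sum: "sum_list (map tm [1..<Suc k]) \<le> lm 0 - lm k"
proof (induction k)
  case (Suc k)
  have "sum_list (map tm [1..<Suc (Suc k)]) = sum_list (map tm [1..<Suc k]) + tm (Suc k)" by simp
  then show ?case using Suc tm_le[of k] by simp
qed simp

lemma lm0: "lm 0 \<le> 1"
  unfolding lm_def LL_def by (simp add: init_def Prob_def)

lemma T_le_bound: "(\<Sum>\<tau>\<in>T_le k \<sigma> f. Prob \<tau>) \<le> 1 - lm k"
proof -
  define xs where "xs = concat (map (\<lambda>n. filter terminal_e (LL n)) [1..<Suc k])"
  have sub: "T_le k \<sigma> f \<subseteq> set xs"
  proof
    fix \<tau> assume "\<tau> \<in> T_le k \<sigma> f"
    then obtain n where n: "1 \<le> n" "n \<le> k" "steps f n (init \<sigma>) \<tau>" "terminal_e \<tau>"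
      by (auto simp: T_le_def)
    then show "\<tau> \<in> set xs" unfolding xs_def LL_def using steps_iter[OF n(3)]
      by (auto intro!: bexI[of _ n]) (metis le_neq_implies_less)
  qed
  have nn: "\<And>x. x \<in> set xs \<Longrightarrow> 0 \<le> Prob x" unfolding xs_def using LL_nonneg by auto
  have "(\<Sum>\<tau>\<in>T_le k \<sigma> f. Prob \<tau>) \<le> sum_list (map Prob xs)"
    by (rule sum_subset_le_sum_list[OF sub nn])
  also have "\<dots> = sum_list (map tm [1..<Suc k])"
    unfolding xs_def tm_def sum_list_concat_map ..
  also have "\<dots> \<le> 1 - lm k" using tm_sum[of k] lm0 by simp
  finally show ?thesis .
qed

lemma ExpRuntime_top:
  assumes "\<And>N::real. \<exists>K. N \<le> (\<Sum>k<K. real_of_rat (lm k))"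
  shows "ExpRuntime \<sigma> f = top"
proof (rule ccontr)
  assume "ExpRuntime \<sigma> f \<noteq> top"
  then obtain R where R: "R \<ge> 0" "ExpRuntime \<sigma> f = ennreal R"
    using less_top_ennreal top.not_eq_extremum by blast
  obtain K where K: "R + 1 \<le> (\<Sum>k<K. real_of_rat (lm k))" using assms by blast
  define a where "a k = real_of_rat (1 - (\<Sum>\<tau>\<in>T_le k \<sigma> f. Prob \<tau>))" for k
  have la: "real_of_rat (lm k) \<le> a k" for k
    unfolding a_def of_rat_less_eq using T_le_bound[of k] by simp
  have "ennreal (\<Sum>k<K. real_of_rat (lm k)) = (\<Sum>k<K. ennreal (real_of_rat (lm k)))"
    using lm_nonneg by (subst sum_ennreal) auto
  also have "\<dots> \<le> (\<Sum>k<K. ennreal (a k))" using la by (intro sum_mono ennreal_leI) auto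
  also have "\<dots> \<le> (\<Sum>k. ennreal (a k))" by (intro sum_le_suminf summableI) auto
  also have "\<dots> = ExpRuntime \<sigma> f" unfolding ExpRuntime_def a_def ..
  finally have "ennreal (R + 1) \<le> ennreal R" using K R(2)
    by (metis ennreal_leI order_trans)
  then show False using R(1) by simp
qed

end

lemma sl_distinct_ds:
  assumes "e1 \<in> set (sl d P \<eta>)" "e2 \<in> set (sl d P \<eta>)" "e1 \<noteq> e2"
  shows "\<exists>x1 x2. x1 \<noteq> x2 \<and> snd (snd (snd e1)) = [x1] \<and> snd (snd (snd e2)) = [x2]"
  using sl_shape[of d P \<eta>] assms unfolding shape_def by auto

lemma nd_ds: "is_nd P \<Longrightarrow> e \<in> set (sl d P \<eta>) \<Longrightarrow> \<exists>x. snd (snd (snd e)) = [x]"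
proof -
  assume a: "is_nd P" "e \<in> set (sl d P \<eta>)"
  obtain l r where lr: "\<forall>d. sl d P \<eta> = (if d = Ln then [(fst l, snd l, 1, [Ln])]
    else if d = Rn then [(fst r, snd r, 1, [Rn])] else [])" using nd_sl[OF a(1)] by blast
  show ?thesis using lr[rule_format, of d] a(2) by (auto split: if_splits)
qed

lemma op_argmax: "op G x = val (if val Ln G x < val Rn G x then Rn else Ln) G x"
  unfolding op_def using sl_indep[of "fst x" Ln "snd x" Rn] by (auto simp: val_def max_def)

locale bad =
  fixes T :: "pstate set" and s0 :: pstate
  assumes T_B0: "B0 \<subseteq> T" and T_closed: "sclosed T"
    and T_unfin: "\<And>x. x \<notin> T \<Longrightarrow> \<not> fin T x" and s0_notin: "s0 \<notin> T"
begin

definition fresh :: "estate \<Rightarrow> nat" where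
  "fresh s = (if st s \<notin> T \<and> 0 < Prob s
     then LEAST n. 1 / real_of_rat (Prob s) + 1 \<le> W n T (st s) else 2)"

definition ch :: "estate \<times> nat \<Rightarrow> dir" where
  "ch c = (if val Ln (W (snd c - 1) T) (st (fst c)) < val Rn (W (snd c - 1) T) (st (fst c)) then Rn else Ln)"

definition upd :: "estate \<Rightarrow> nat \<Rightarrow> nat" where
  "upd s q = (if q - 1 \<le> 1 then fresh s else q - 1)"

definition tsucc :: "estate \<times> nat \<Rightarrow> (estate \<times> nat) list" where
  "tsucc c = map (\<lambda>s'. (s', upd s' (snd c))) (esl (\<lambda>_. ch c) (fst c))"

abbreviation TL :: "nat \<Rightarrow> estate \<times> nat \<Rightarrow> (estate \<times> nat) list" where
  "TL \<equiv> iter tsucc"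

definition c0 :: "estate \<times> nat" where "c0 = (init s0, fresh (init s0))"

definition RC :: "(estate \<times> nat) set" where "RC = {c. \<exists>k. c \<in> set (TL k c0)}"

definition fS :: sched where
  "fS w = (if \<exists>c\<in>RC. is_nd (fst (fst c)) \<and> trace (fst c) = w
     then ch (THE c. c \<in> RC \<and> is_nd (fst (fst c)) \<and> trace (fst c) = w) else Ln)"

lemma ch_dir: "ch c = Ln \<or> ch c = Rn"
  unfolding ch_def by auto

lemma fS_sched: "fS \<in> schedulers"
  unfolding schedulers_def fS_def using ch_dir by auto

lemma tsucc_mem:
  assumes "c' \<in> set (tsucc c)"
  shows "\<exists>P' \<eta>' m ds. (P', \<eta>', m, ds) \<in> set (sl (ch c) (fst (fst c)) (fst (snd (fst c)))) \<and>
    fst c' = (P', \<eta>', Prob (fst c) * m, trace (fst c) @ ds) \<and> snd c' = upd (fst c') (snd c)"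
  using assms unfolding tsucc_def esl_def by (auto simp: trace_def)

lemma tsucc_SRel: "c' \<in> set (tsucc c) \<Longrightarrow> (st (fst c), st (fst c')) \<in> SRel"
proof -
  assume "c' \<in> set (tsucc c)"
  from tsucc_mem[OF this] obtain P' \<eta>' m ds where
    e: "(P', \<eta>', m, ds) \<in> set (sl (ch c) (fst (fst c)) (fst (snd (fst c))))"
    "fst c' = (P', \<eta>', Prob (fst c) * m, trace (fst c) @ ds)" by blast
  have "st (fst c') = (P', \<eta>')" using e(2) by (simp add: st_def)
  then show ?thesis unfolding SRel_def st_def using e(1) by auto
qed

lemma tsucc_Prob: "c' \<in> set (tsucc c) \<Longrightarrow> 0 \<le> Prob (fst c) \<Longrightarrow> 0 \<le> Prob (fst c')"
proof -
  assume a: "c' \<in> set (tsucc c)" "0 \<le> Prob (fst c)"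
  from tsucc_mem[OF a(1)] obtain P' \<eta>' m ds where
    e: "(P', \<eta>', m, ds) \<in> set (sl (ch c) (fst (fst c)) (fst (snd (fst c))))"
    "fst c' = (P', \<eta>', Prob (fst c) * m, trace (fst c) @ ds)" by blast
  have "0 < m" using sl_pos[OF e(1)] by simp
  then show ?thesis using e(2) a(2) by (simp add: Prob_def)
qed

lemma TL_Prob: "0 \<le> Prob (fst c) \<Longrightarrow> c' \<in> set (TL j c) \<Longrightarrow> 0 \<le> Prob (fst c')"
proof (induction j arbitrary: c)
  case (Suc j)
  then obtain c'' where "c'' \<in> set (tsucc c)" "c' \<in> set (TL j c'')" by auto
  then show ?case using Suc.IH[of c''] tsucc_Prob[of c'' c] Suc.prems(1) by blast
qed simp

lemma TL_T: "st (fst c) \<in> T \<Longrightarrow> c' \<in> set (TL j c) \<Longrightarrow> st (fst c') \<in> T"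
proof (induction j arbitrary: c)
  case (Suc j)
  then obtain c'' where c'': "c'' \<in> set (tsucc c)" "c' \<in> set (TL j c'')" by auto
  have "st (fst c'') \<in> T" using tsucc_SRel[OF c''(1)] T_closed Suc.prems(1) unfolding sclosed_def by blast
  then show ?case using Suc.IH c''(2) by blast
qed simp

lemma tsucc_trace: "c' \<in> set (tsucc c) \<Longrightarrow> \<exists>v. trace (fst c') = trace (fst c) @ v"
proof -
  assume a: "c' \<in> set (tsucc c)"
  from tsucc_mem[OF a(1)] obtain P' \<eta>' m ds where
    e: "fst c' = (P', \<eta>', Prob (fst c) * m, trace (fst c) @ ds)" by blast
  then show ?thesis by (simp add: trace_def)
qed

lemma TL_trace: "c' \<in> set (TL k c) \<Longrightarrow> \<exists>v. trace (fst c') = trace (fst c) @ v"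
proof (induction k arbitrary: c)
  case (Suc k)
  then obtain c'' where c'': "c'' \<in> set (tsucc c)" "c' \<in> set (TL k c'')" by auto
  obtain v1 where "trace (fst c'') = trace (fst c) @ v1" using tsucc_trace[OF c''(1)] by blast
  moreover obtain v2 where "trace (fst c') = trace (fst c'') @ v2" using Suc.IH[OF c''(2)] by blast
  ultimately show ?case by auto
qed simp

lemma tsucc_nd_trace:
  assumes "is_nd (fst (fst c))" "c' \<in> set (tsucc c)"
  shows "\<exists>x. trace (fst c') = trace (fst c) @ [x]"
proof -
  from tsucc_mem[OF assms(2)] obtain P' \<eta>' m ds where
    e: "(P', \<eta>', m, ds) \<in> set (sl (ch c) (fst (fst c)) (fst (snd (fst c))))"
    "fst c' = (P', \<eta>', Prob (fst c) * m, trace (fst c) @ ds)" by blast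
  obtain x where "ds = [x]" using nd_ds[OF assms(1) e(1)] by auto
  then show ?thesis using e(2) by (simp add: trace_def)
qed

lemma tsucc_distinct_trace:
  assumes "c1 \<in> set (tsucc c)" "c2 \<in> set (tsucc c)" "c1 \<noteq> c2"
  shows "\<exists>x1 x2. x1 \<noteq> x2 \<and> trace (fst c1) = trace (fst c) @ [x1] \<and> trace (fst c2) = trace (fst c) @ [x2]"
proof -
  obtain P1 \<eta>1 m1 ds1 where e1: "(P1, \<eta>1, m1, ds1) \<in> set (sl (ch c) (fst (fst c)) (fst (snd (fst c))))"
    "fst c1 = (P1, \<eta>1, Prob (fst c) * m1, trace (fst c) @ ds1)" "snd c1 = upd (fst c1) (snd c)"
    using tsucc_mem[OF assms(1)] by blast
  obtain P2 \<eta>2 m2 ds2 where e2: "(P2, \<eta>2, m2, ds2) \<in> set (sl (ch c) (fst (fst c)) (fst (snd (fst c))))"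
    "fst c2 = (P2, \<eta>2, Prob (fst c) * m2, trace (fst c) @ ds2)" "snd c2 = upd (fst c2) (snd c)"
    using tsucc_mem[OF assms(2)] by blast
  have "(P1, \<eta>1, m1, ds1) \<noteq> (P2, \<eta>2, m2, ds2)"
  proof
    assume "(P1, \<eta>1, m1, ds1) = (P2, \<eta>2, m2, ds2)"
    then have "fst c1 = fst c2" using e1 e2 by simp
    then have "c1 = c2" using e1(3) e2(3) by (intro prod_eqI) simp_all
    then show False using assms(3) by simp
  qed
  from sl_distinct_ds[OF e1(1) e2(1) this] obtain x1 x2 where
    "x1 \<noteq> x2" "ds1 = [x1]" "ds2 = [x2]" by auto
  then show ?thesis using e1(2) e2(2) by (auto simp: trace_def)
qed

lemma TL_nd_longer:
  assumes "is_nd (fst (fst c))" "y \<in> set (TL (Suc k) c)"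
  shows "length (trace (fst c)) < length (trace (fst y))"
proof -
  from assms(2) obtain c' where "c' \<in> set (tsucc c)" "y \<in> set (TL k c')" by auto
  then obtain x v where "trace (fst c') = trace (fst c) @ [x]" "trace (fst y) = trace (fst c') @ v"
    using tsucc_nd_trace[OF assms(1)] TL_trace by blast
  then show ?thesis by simp
qed

lemma TL_unique:
  assumes "x \<in> set (TL k1 c)" "y \<in> set (TL k2 c)" "is_nd (fst (fst x))" "is_nd (fst (fst y))"
    "trace (fst x) = trace (fst y)"
  shows "x = y"
  using assms
proof (induction k1 arbitrary: c k2)
  case 0
  then have xc: "x = c" by simp
  show ?case
  proof (cases "k2 = 0")
    case True then show ?thesis using "0.prems"(2) xc by simp
  next
    case False
    then obtain k where k: "k2 = Suc k" by (cases k2) auto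
    have "length (trace (fst c)) < length (trace (fst y))"
      using TL_nd_longer[of c y k] "0.prems"(2,3) xc k by simp
    then show ?thesis using "0.prems"(5) xc by simp
  qed
next
  case (Suc k1)
  note IH = Suc.IH and pr = Suc.prems
  show ?case
  proof (cases "k2 = 0")
    case True
    then have yc: "y = c" using pr(2) by simp
    have "length (trace (fst c)) < length (trace (fst x))"
      using TL_nd_longer[of c x k1] pr(1,4) yc by simp
    then show ?thesis using pr(5) yc by simp
  next
    case False
    then obtain k2' where k: "k2 = Suc k2'" by (cases k2) auto
    from pr(1) obtain c1 where c1: "c1 \<in> set (tsucc c)" "x \<in> set (TL k1 c1)" by auto
    from pr(2) k obtain c2 where c2: "c2 \<in> set (tsucc c)" "y \<in> set (TL k2' c2)" by auto
    show ?thesis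
    proof (cases "c1 = c2")
      case True
      then show ?thesis using IH[of c1 k2', OF c1(2) _ pr(3) pr(4) pr(5)] c2(2) by simp
    next
      case False
      from tsucc_distinct_trace[OF c1(1) c2(1) False] obtain x1 x2 where
        xx: "x1 \<noteq> x2" "trace (fst c1) = trace (fst c) @ [x1]" "trace (fst c2) = trace (fst c) @ [x2]"
        by blast
      obtain v1 where "trace (fst x) = trace (fst c1) @ v1" using TL_trace[OF c1(2)] by blast
      moreover obtain v2 where "trace (fst y) = trace (fst c2) @ v2" using TL_trace[OF c2(2)] by blast
      ultimately have "trace (fst c) @ [x1] @ v1 = trace (fst c) @ [x2] @ v2"
        using xx pr(5) by simp
      then show ?thesis using xx(1) by simp
    qed
  qed
qed

lemma RC_tsucc: "c \<in> RC \<Longrightarrow> c' \<in> set (tsucc c) \<Longrightarrow> c' \<in> RC"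
proof -
  assume "c \<in> RC" "c' \<in> set (tsucc c)"
  then obtain k where "c \<in> set (TL k c0)" unfolding RC_def by blast
  then have "c' \<in> set (TL (Suc k) c0)" unfolding iter_Suc_last using `c' \<in> set (tsucc c)` by auto
  then show ?thesis unfolding RC_def by blast
qed

lemma c0_RC: "c0 \<in> RC"
  unfolding RC_def by (auto intro: exI[of _ 0])

lemma fS_ch: assumes "c \<in> RC" "is_nd (fst (fst c))" shows "fS (trace (fst c)) = ch c"
proof -
  have "(THE c'. c' \<in> RC \<and> is_nd (fst (fst c')) \<and> trace (fst c') = trace (fst c)) = c"
  proof (rule the_equality)
    fix c' assume c': "c' \<in> RC \<and> is_nd (fst (fst c')) \<and> trace (fst c') = trace (fst c)"
    then obtain k1 where "c' \<in> set (TL k1 c0)" unfolding RC_def by blast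
    moreover obtain k2 where "c \<in> set (TL k2 c0)" using assms(1) unfolding RC_def by blast
    ultimately show "c' = c" using TL_unique c' assms(2) by blast
  qed (use assms in auto)
  then show ?thesis unfolding fS_def using assms by auto
qed

lemma esl_cong: "(is_nd (fst s) \<Longrightarrow> f (trace s) = g (trace s)) \<Longrightarrow> esl f s = esl g s"
  unfolding esl_def using sl_indep by metis

lemma tsucc_fst: "c \<in> RC \<Longrightarrow> map fst (tsucc c) = esl fS (fst c)"
proof -
  assume c: "c \<in> RC"
  have "map fst (tsucc c) = esl (\<lambda>_. ch c) (fst c)" unfolding tsucc_def by (simp add: comp_def)
  also have "\<dots> = esl fS (fst c)"
    by (rule esl_cong) (use fS_ch[OF c] in \<open>simp add: trace_def\<close>)
  finally show ?thesis .
qed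

lemma TL_fst: "c \<in> RC \<Longrightarrow> map fst (TL k c) = iter (esl fS) k (fst c)"
proof (induction k arbitrary: c)
  case (Suc k)
  have "map fst (TL (Suc k) c) = concat (map (\<lambda>c'. map fst (TL k c')) (tsucc c))"
    by (simp add: map_concat comp_def)
  also have "\<dots> = concat (map (\<lambda>c'. iter (esl fS) k (fst c')) (tsucc c))"
    using Suc.IH RC_tsucc[OF Suc.prems] by (intro arg_cong[where f=concat] map_cong) auto
  also have "\<dots> = concat (map (iter (esl fS) k) (map fst (tsucc c)))" by (simp add: comp_def)
  also have "\<dots> = iter (esl fS) (Suc k) (fst c)" using tsucc_fst[OF Suc.prems] by simp
  finally show ?case .
qed simp

end

context bad
begin

definition pr :: "estate \<times> nat \<Rightarrow> real" where "pr c = real_of_rat (Prob (fst c))"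

definition Mc :: "estate \<times> nat \<Rightarrow> nat \<Rightarrow> real" where
  "Mc c j = sum_list (map pr (filter (\<lambda>c'. st (fst c') \<notin> T) (TL j c)))"

definition tot :: "estate \<times> nat \<Rightarrow> nat \<Rightarrow> real" where
  "tot c j = sum_list (map pr (TL j c))"

lemma Mc_Suc: "Mc c (Suc j) = sum_list (map (\<lambda>c'. Mc c' j) (tsucc c))"
  unfolding Mc_def iter.simps(2) sum_list_filter_concat ..

lemma tot_Suc: "tot c (Suc j) = sum_list (map (\<lambda>c'. tot c' j) (tsucc c))"
  unfolding tot_def iter.simps(2) sum_list_concat_map ..

lemma Mc_0: "Mc c 0 = (if st (fst c) \<notin> T then pr c else 0)"
  unfolding Mc_def by simp

lemma pr_nonneg: "0 \<le> Prob (fst c) \<Longrightarrow> 0 \<le> pr c"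
  unfolding pr_def by simp

lemma Mc_nonneg: "0 \<le> Prob (fst c) \<Longrightarrow> 0 \<le> Mc c j"
proof -
  assume p: "0 \<le> Prob (fst c)"
  show ?thesis unfolding Mc_def
  proof (rule sum_list_nonneg)
    fix x assume "x \<in> set (map pr (filter (\<lambda>c'. st (fst c') \<notin> T) (TL j c)))"
    then obtain c' where "c' \<in> set (TL j c)" "x = pr c'" by auto
    then show "0 \<le> x" using TL_Prob[OF p] pr_nonneg by simp
  qed
qed

lemma Mc_le_tot: "0 \<le> Prob (fst c) \<Longrightarrow> Mc c j \<le> tot c j"
proof -
  assume p: "0 \<le> Prob (fst c)"
  have "tot c j = Mc c j + sum_list (map pr (filter (\<lambda>c'. \<not> st (fst c') \<notin> T) (TL j c)))"
    unfolding tot_def Mc_def by (rule sum_list_split_filter)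
  moreover have "0 \<le> sum_list (map pr (filter (\<lambda>c'. \<not> st (fst c') \<notin> T) (TL j c)))"
  proof (rule sum_list_nonneg)
    fix x assume "x \<in> set (map pr (filter (\<lambda>c'. \<not> st (fst c') \<notin> T) (TL j c)))"
    then obtain c' where "c' \<in> set (TL j c)" "x = pr c'" by auto
    then show "0 \<le> x" using TL_Prob[OF p] pr_nonneg by simp
  qed
  ultimately show ?thesis by simp
qed

lemma wsum: "sum_list (map (\<lambda>c'. pr c' * G (st (fst c'))) (tsucc c)) = pr c * val (ch c) G (st (fst c))"
  unfolding tsucc_def esl_def val_def pr_def
  by (simp add: comp_def split_def st_def Prob_def of_rat_mult sum_list_mult_left[symmetric] mult.assoc)

lemma val_one: "val d (\<lambda>_. 1) x \<le> 1"
proof -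
  have "val d (\<lambda>_. 1) x = real_of_rat (sum_list (map (\<lambda>e. fst (snd (snd e))) (sl d (fst x) (snd x))))"
    unfolding val_def of_rat_sum_list by (simp add: split_def)
  also have "\<dots> \<le> 1" using sl_sum_le1 of_rat_less_eq by fastforce
  finally show ?thesis .
qed

lemma tot_le: "0 \<le> Prob (fst c) \<Longrightarrow> tot c j \<le> pr c"
proof (induction j arbitrary: c)
  case 0 then show ?case by (simp add: tot_def)
next
  case (Suc j)
  have "tot c (Suc j) = sum_list (map (\<lambda>c'. tot c' j) (tsucc c))" by (rule tot_Suc)
  also have "\<dots> \<le> sum_list (map (\<lambda>c'. pr c' * 1) (tsucc c))"
    using Suc.IH tsucc_Prob Suc.prems by (intro sum_list_mono) auto
  also have "\<dots> = pr c * val (ch c) (\<lambda>_. 1) (st (fst c))" by (rule wsum)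
  also have "\<dots> \<le> pr c * 1" using val_one pr_nonneg[OF Suc.prems] by (intro mult_left_mono) auto
  finally show ?case by simp
qed

lemma val_cong: "(\<And>y. (x, y) \<in> SRel \<Longrightarrow> G y = H y) \<Longrightarrow> val d G x = val d H x"
  using val_mono[of x G H d] val_mono[of x H G d] by fastforce

lemma val_zero: "val d (\<lambda>_. 0) x = 0"
  unfolding val_def by (simp add: split_def)

lemma val_T: "x \<in> T \<Longrightarrow> val d (W m T) x = 0"
proof -
  assume x: "x \<in> T"
  have "val d (W m T) x = val d (\<lambda>_. 0) x"
  proof (rule val_cong)
    fix y assume "(x, y) \<in> SRel"
    then have "y \<in> T" using x T_closed unfolding sclosed_def by blast
    then show "W m T y = 0" by (simp add: W_inB)
  qed
  then show ?thesis by (simp add: val_zero)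
qed

lemma upper: "0 \<le> Prob (fst c) \<Longrightarrow> (\<Sum>j<m. Mc c j) \<le> pr c * W m T (st (fst c))"
proof (induction m arbitrary: c)
  case 0 then show ?case by simp
next
  case (Suc m)
  have p: "0 \<le> pr c" using pr_nonneg[OF Suc.prems] .
  have "(\<Sum>j<Suc m. Mc c j) = Mc c 0 + (\<Sum>j<m. Mc c (Suc j))" by (rule sum.lessThan_Suc_shift)
  also have "(\<Sum>j<m. Mc c (Suc j)) = sum_list (map (\<lambda>c'. \<Sum>j<m. Mc c' j) (tsucc c))"
    unfolding Mc_Suc by (rule sum_lessThan_sum_list)
  also have "\<dots> \<le> sum_list (map (\<lambda>c'. pr c' * W m T (st (fst c'))) (tsucc c))"
    using Suc.IH tsucc_Prob Suc.prems by (intro sum_list_mono) auto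
  also have "\<dots> = pr c * val (ch c) (W m T) (st (fst c))" by (rule wsum)
  finally have A: "(\<Sum>j<Suc m. Mc c j) \<le> Mc c 0 + pr c * val (ch c) (W m T) (st (fst c))" by simp
  show ?case
  proof (cases "st (fst c) \<in> T")
    case True
    then show ?thesis using A val_T[OF True] by (simp add: Mc_0)
  next
    case False
    have "val (ch c) (W m T) (st (fst c)) \<le> op (W m T) (st (fst c))"
      by (rule val_le_op) (rule ch_dir)
    then have "pr c * val (ch c) (W m T) (st (fst c)) \<le> pr c * op (W m T) (st (fst c))"
      using p by (rule mult_left_mono)
    then show ?thesis using A False by (simp add: Mc_0 algebra_simps)
  qed
qed

lemma opt: "0 \<le> Prob (fst c) \<Longrightarrow> snd c = Suc n \<or> n = 0 \<Longrightarrow>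
  pr c * W (Suc n) T (st (fst c)) \<le> (\<Sum>j<Suc n. Mc c j)"
proof (induction n arbitrary: c)
  case 0
  then show ?case using W_one[of "st (fst c)" T] by (simp add: Mc_0)
next
  case (Suc n)
  have p: "0 \<le> pr c" using pr_nonneg[OF Suc.prems(1)] .
  have sc: "snd c = Suc (Suc n)" using Suc.prems(2) by simp
  have succ_mem: "snd c' = Suc n \<or> n = 0" if "c' \<in> set (tsucc c)" for c'
  proof -
    from tsucc_mem[OF that] have "snd c' = upd (fst c') (snd c)" by blast
    then show ?thesis using sc by (auto simp: upd_def)
  qed
  have E1: "(\<Sum>j<Suc (Suc n). Mc c j) = Mc c 0 + (\<Sum>j<Suc n. Mc c (Suc j))" by (rule sum.lessThan_Suc_shift)
  have E2: "(\<Sum>j<Suc n. Mc c (Suc j)) = sum_list (map (\<lambda>c'. \<Sum>j<Suc n. Mc c' j) (tsucc c))"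
    unfolding Mc_Suc by (rule sum_lessThan_sum_list)
  have E3: "sum_list (map (\<lambda>c'. pr c' * W (Suc n) T (st (fst c'))) (tsucc c)) \<le>
      sum_list (map (\<lambda>c'. \<Sum>j<Suc n. Mc c' j) (tsucc c))"
    using Suc.IH tsucc_Prob Suc.prems(1) succ_mem by (intro sum_list_mono) auto
  have E4: "sum_list (map (\<lambda>c'. pr c' * W (Suc n) T (st (fst c'))) (tsucc c)) =
      pr c * val (ch c) (W (Suc n) T) (st (fst c))" by (rule wsum)
  have E5: "val (ch c) (W (Suc n) T) (st (fst c)) = op (W (Suc n) T) (st (fst c))"
    unfolding op_argmax[of "W (Suc n) T"] ch_def sc by simp
  have A: "Mc c 0 + pr c * op (W (Suc n) T) (st (fst c)) \<le> (\<Sum>j<Suc (Suc n). Mc c j)"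
    using E1 E2 E3 E4 E5 by simp
  show ?case
  proof (cases "st (fst c) \<in> T")
    case True
    have "0 \<le> (\<Sum>j<Suc (Suc n). Mc c j)" using Mc_nonneg[OF Suc.prems(1)] by (intro sum_nonneg) auto
    then show ?thesis using True by simp
  next
    case False
    then show ?thesis using A by (simp add: Mc_0 algebra_simps)
  qed
qed

lemma mem1: "snd c = q \<Longrightarrow> j + 2 \<le> q \<Longrightarrow> c' \<in> set (TL j c) \<Longrightarrow> snd c' = q - j"
proof (induction j arbitrary: c q)
  case (Suc j)
  then obtain c'' where c'': "c'' \<in> set (tsucc c)" "c' \<in> set (TL j c'')" by auto
  have "snd c'' = upd (fst c'') (snd c)" using tsucc_mem[OF c''(1)] by blast
  then have "snd c'' = q - 1" using Suc.prems by (auto simp: upd_def)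
  then have "snd c' = q - 1 - j" using Suc.IH[of c'' "q - 1"] Suc.prems c''(2) by simp
  then show ?case by simp
qed simp

lemma mem2: "snd c = q \<Longrightarrow> 2 \<le> q \<Longrightarrow> c' \<in> set (TL (q - 1) c) \<Longrightarrow> snd c' = fresh (fst c')"
proof -
  assume a: "snd c = q" "2 \<le> q" "c' \<in> set (TL (q - 1) c)"
  have "q - 1 = Suc (q - 2)" using a(2) by simp
  then have "c' \<in> set (TL (Suc (q - 2)) c)" using a(3) by simp
  then have "c' \<in> set (concat (map tsucc (TL (q - 2) c)))" by (simp only: iter_Suc_last)
  then obtain c'' where c'': "c'' \<in> set (TL (q - 2) c)" "c' \<in> set (tsucc c'')" by auto
  have "snd c'' = 2" using mem1[OF a(1) _ c''(1)] a(2) by simp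
  moreover have "snd c' = upd (fst c') (snd c'')" using tsucc_mem[OF c''(2)] by blast
  ultimately show ?thesis by (simp add: upd_def)
qed

lemma stage:
  assumes c: "snd c = fresh (fst c)" "st (fst c) \<notin> T" "0 < Prob (fst c)"
  shows "\<exists>j c'. c' \<in> set (TL j c) \<and> snd c' = fresh (fst c') \<and> st (fst c') \<notin> T \<and>
    0 < Prob (fst c') \<and> 1 \<le> (\<Sum>i<j. Mc c i)"
proof -
  define b where "b = pr c"
  define \<tau> where "\<tau> = st (fst c)"
  have b0: "0 < b" unfolding b_def pr_def using c(3) by simp
  define Pn where "Pn n \<longleftrightarrow> 1 / b + 1 \<le> W n T \<tau>" for n
  have ex: "\<exists>n. Pn n"
  proof (rule ccontr)
    assume "\<not> (\<exists>n. Pn n)"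
    then have "\<forall>n. W n T \<tau> \<le> 1 / b + 1" unfolding Pn_def by (metis less_imp_le not_le)
    then have "fin T \<tau>" unfolding fin_def by (intro bdd_aboveI2) auto
    then show False using T_unfin c(2) unfolding \<tau>_def by blast
  qed
  define r where "r = snd c"
  have r: "r = (LEAST n. Pn n)"
    unfolding r_def c(1) fresh_def Pn_def b_def pr_def \<tau>_def using c(2,3) by simp
  have Pr: "Pn r" unfolding r by (rule LeastI_ex[OF ex])
  have ib: "0 < 1 / b" using b0 by simp
  have "r \<noteq> 0"
  proof
    assume "r = 0"
    with Pr have "1 / b + 1 \<le> 0" unfolding Pn_def by simp
    with ib show False by linarith
  qed
  moreover have "r \<noteq> 1"
  proof
    assume "r = 1"
    with Pr have "1 / b + 1 \<le> W 1 T \<tau>" unfolding Pn_def by simp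
    also have "W 1 T \<tau> = 1" using W_one[of \<tau> T] c(2) unfolding \<tau>_def by simp
    finally show False using ib by simp
  qed
  ultimately have r2: "2 \<le> r" by simp
  have nPr: "\<not> Pn (r - 1)" unfolding r by (rule not_less_Least) (use r2 r in simp)
  have p0: "0 \<le> Prob (fst c)" using c(3) by simp
  have O: "b * W r T \<tau> \<le> (\<Sum>j<r. Mc c j)"
    using opt[OF p0, of "r - 1"] r2 unfolding b_def \<tau>_def r_def by simp
  have U: "(\<Sum>j<r - 1. Mc c j) \<le> b * W (r - 1) T \<tau>"
    using upper[OF p0, of "r - 1"] unfolding b_def \<tau>_def by simp
  have L: "Mc c (r - 1) \<le> b" using Mc_le_tot[OF p0] tot_le[OF p0] unfolding b_def by (meson order_trans)
  have S: "(\<Sum>j<r. Mc c j) = (\<Sum>j<r - 1. Mc c j) + Mc c (r - 1)"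
    using r2 sum.lessThan_Suc[of "Mc c" "r - 1"] by simp
  have Wr: "1 / b + 1 \<le> W r T \<tau>" using Pr unfolding Pn_def .
  have Wr1: "W (r - 1) T \<tau> < 1 / b + 1" using nPr unfolding Pn_def by simp
  have bb: "b * (1 / b + 1) = 1 + b" using b0 by (simp add: field_simps)
  have "b * (1 / b + 1) \<le> b * W r T \<tau>" using Wr b0 by (intro mult_left_mono) auto
  then have bW: "1 + b \<le> b * W r T \<tau>" unfolding bb .
  have bW1: "b * W (r - 1) T \<tau> < 1 + b"
  proof -
    have "b * W (r - 1) T \<tau> < b * (1 / b + 1)" using Wr1 b0 by (intro mult_strict_left_mono) auto
    then show ?thesis unfolding bb .
  qed
  have one: "1 \<le> (\<Sum>j<r - 1. Mc c j)" using O S L bW by linarith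
  have pos: "0 < Mc c (r - 1)" using O S U bW bW1 by linarith
  obtain c' where c': "c' \<in> set (TL (r - 1) c)" "st (fst c') \<notin> T" "0 < pr c'"
  proof -
    have "\<exists>x\<in>set (filter (\<lambda>c'. st (fst c') \<notin> T) (TL (r - 1) c)). 0 < pr x"
    proof (rule ccontr)
      assume nt: "\<not> ?thesis"
      have "Mc c (r - 1) \<le> 0" unfolding Mc_def
      proof (rule sum_list_nonpos)
        fix x assume "x \<in> set (map pr (filter (\<lambda>c'. st (fst c') \<notin> T) (TL (r - 1) c)))"
        then obtain c' where "c' \<in> set (filter (\<lambda>c'. st (fst c') \<notin> T) (TL (r - 1) c))" "x = pr c'"
          by auto
        then show "x \<le> 0" using nt by (meson not_less)
      qed
      then show False using pos by simp
    qed
    then show ?thesis using that by auto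
  qed
  have "snd c' = fresh (fst c')" using mem2[OF r_def[symmetric] r2 c'(1)] .
  moreover have "0 < Prob (fst c')" using c'(3) unfolding pr_def by simp
  ultimately show ?thesis using c' one by blast
qed

end

context bad
begin

lemma c0_Prob: "Prob (fst c0) = 1"
  unfolding c0_def init_def Prob_def by simp

lemma c0_st: "st (fst c0) = s0"
  unfolding c0_def init_def st_def by simp

lemma TL0_Prob: "c \<in> set (TL t c0) \<Longrightarrow> 0 \<le> Prob (fst c)"
  using TL_Prob[of c0 c t] c0_Prob by simp

lemma Mc_concat:
  assumes "c \<in> set (TL t c0)"
  shows "Mc c i \<le> Mc c0 (t + i)"
proof -
  have "Mc c0 (t + i) = sum_list (map (\<lambda>c''. Mc c'' i) (TL t c0))"
    unfolding Mc_def iter_add sum_list_filter_concat ..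
  moreover have "Mc c i \<in> set (map (\<lambda>c''. Mc c'' i) (TL t c0))" using assms by simp
  moreover have "\<And>y. y \<in> set (map (\<lambda>c''. Mc c'' i) (TL t c0)) \<Longrightarrow> 0 \<le> y"
    using Mc_nonneg TL0_Prob by auto
  ultimately show ?thesis using my_member_le_sum_list by metis
qed

lemma sum_split_add: "(\<Sum>k<t + j. (g :: nat \<Rightarrow> real) k) = (\<Sum>k<t. g k) + (\<Sum>i<j. g (t + i))"
  by (induction j) (auto simp: algebra_simps)

lemma chain: "\<exists>t c. c \<in> set (TL t c0) \<and> snd c = fresh (fst c) \<and> st (fst c) \<notin> T \<and>
    0 < Prob (fst c) \<and> real N \<le> (\<Sum>k<t. Mc c0 k)"
proof (induction N)
  case 0
  show ?case
    by (rule exI[of _ 0], rule exI[of _ c0]) (simp add: c0_Prob c0_st s0_notin, simp add: c0_def)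
next
  case (Suc N)
  then obtain t c where tc: "c \<in> set (TL t c0)" "snd c = fresh (fst c)" "st (fst c) \<notin> T"
    "0 < Prob (fst c)" "real N \<le> (\<Sum>k<t. Mc c0 k)" by blast
  from stage[OF tc(2-4)] obtain j c' where jc: "c' \<in> set (TL j c)" "snd c' = fresh (fst c')"
    "st (fst c') \<notin> T" "0 < Prob (fst c')" "1 \<le> (\<Sum>i<j. Mc c i)" by blast
  have "c' \<in> set (TL (t + j) c0)" by (rule iter_mem_add[OF tc(1) jc(1)])
  moreover have "real (Suc N) \<le> (\<Sum>k<t + j. Mc c0 k)"
  proof -
    have "(\<Sum>i<j. Mc c i) \<le> (\<Sum>i<j. Mc c0 (t + i))"
      using Mc_concat[OF tc(1)] by (intro sum_mono) auto
    then show ?thesis using tc(5) jc(5) unfolding sum_split_add by simp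
  qed
  ultimately show ?case using jc(2-4) by blast
qed

lemma Mc_lm: "Mc c0 k \<le> real_of_rat (lm fS s0 k)"
proof -
  have fs: "map fst (TL k c0) = LL fS s0 k"
    unfolding LL_def using TL_fst[OF c0_RC, of k] by (simp add: c0_def)
  have "Mc c0 k = sum_list (map (\<lambda>s. real_of_rat (Prob s)) (filter (\<lambda>s. st s \<notin> T) (map fst (TL k c0))))"
    unfolding Mc_def pr_def by (simp add: filter_map comp_def)
  also have "\<dots> \<le> sum_list (map (\<lambda>s. real_of_rat (Prob s)) (filter (\<lambda>s. \<not> terminal_e s) (map fst (TL k c0))))"
  proof (rule sum_list_filter_mono)
    fix s assume "s \<in> set (map fst (TL k c0))"
    then show "0 \<le> real_of_rat (Prob s)" using TL0_Prob by auto
  next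
    fix s assume ns: "st s \<notin> T"
    show "\<not> terminal_e s"
    proof
      assume "terminal_e s"
      then have "st s \<in> B0" unfolding terminal_e_def B0_def st_def by simp
      then show False using T_B0 ns by blast
    qed
  qed
  also have "\<dots> = real_of_rat (lm fS s0 k)"
    unfolding lm_def fs of_rat_sum_list by simp
  finally show ?thesis .
qed

lemma fS_bad: "ExpRuntime s0 fS = top"
proof (rule ExpRuntime_top)
  fix N :: real
  obtain n :: nat where "N \<le> real n" using real_arch_simple by blast
  obtain t c where "real n \<le> (\<Sum>k<t. Mc c0 k)" using chain[of n] by blast
  also have "\<dots> \<le> (\<Sum>k<t. real_of_rat (lm fS s0 k))" using Mc_lm by (intro sum_mono) auto
  finally show "\<exists>K. N \<le> (\<Sum>k<K. real_of_rat (lm fS s0 k))" using `N \<le> real n` by (meson order_trans)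
qed

end

lemma bad_sched:
  assumes "B0 \<subseteq> T" "sclosed T" "\<And>x. x \<notin> T \<Longrightarrow> \<not> fin T x" "s0 \<notin> T"
  shows "\<exists>f\<in>schedulers. ExpRuntime s0 f = top"
proof -
  interpret bad T s0 using assms by unfold_locales
  show ?thesis using fS_sched fS_bad by blast
qed

lemma wo_chain:
  fixes Q :: "'a set set"
  assumes cQ: "countable Q" and lin: "\<And>A B. A \<in> Q \<Longrightarrow> B \<in> Q \<Longrightarrow> A \<subseteq> B \<or> B \<subseteq> A"
    and wfQ: "\<And>S. S \<subseteq> Q \<Longrightarrow> S \<noteq> {} \<Longrightarrow> \<exists>A\<in>S. \<forall>B\<in>S. A \<subseteq> B"
  defines "r \<equiv> {(to_nat_on Q A, to_nat_on Q B) | A B. A \<in> Q \<and> B \<in> Q \<and> A \<subseteq> B}"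
  shows "Well_order r" and "Field r = to_nat_on Q ` Q"
    and "\<And>A B. A \<in> Q \<Longrightarrow> B \<in> Q \<Longrightarrow> (to_nat_on Q A, to_nat_on Q B) \<in> r \<longleftrightarrow> A \<subseteq> B"
proof -
  let ?e = "to_nat_on Q"
  have inj: "inj_on ?e Q" using cQ by (rule inj_on_to_nat_on)
  show mem: "\<And>A B. A \<in> Q \<Longrightarrow> B \<in> Q \<Longrightarrow> (?e A, ?e B) \<in> r \<longleftrightarrow> A \<subseteq> B"
  proof -
    fix A B assume AB: "A \<in> Q" "B \<in> Q"
    show "(?e A, ?e B) \<in> r \<longleftrightarrow> A \<subseteq> B"
    proof
      assume "(?e A, ?e B) \<in> r"
      then obtain A' B' where "?e A = ?e A'" "?e B = ?e B'" "A' \<in> Q" "B' \<in> Q" "A' \<subseteq> B'"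
        unfolding r_def by blast
      then show "A \<subseteq> B" using inj_on_eq_iff[OF inj] AB by simp
    qed (use AB in \<open>auto simp: r_def\<close>)
  qed
  have rE: "\<exists>A B. x = ?e A \<and> y = ?e B \<and> A \<in> Q \<and> B \<in> Q \<and> A \<subseteq> B" if "(x, y) \<in> r" for x y
    using that unfolding r_def by simp
  have F: "Field r = ?e ` Q"
  proof
    show "Field r \<subseteq> ?e ` Q"
    proof
      fix x assume "x \<in> Field r"
      then obtain y where "(x, y) \<in> r \<or> (y, x) \<in> r" unfolding Field_def by auto
      then show "x \<in> ?e ` Q" using rE by blast
    qed
    show "?e ` Q \<subseteq> Field r"
    proof
      fix x assume "x \<in> ?e ` Q"
      then obtain A where "A \<in> Q" "x = ?e A" by blast
      then have "(x, x) \<in> r" using mem by simp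
      then show "x \<in> Field r" by (rule FieldI1)
    qed
  qed
  then show "Field r = ?e ` Q" .
  have lo: "Linear_order r"
    unfolding linear_order_on_def partial_order_on_def preorder_on_def
  proof (intro conjI)
    show "r \<subseteq> Field r \<times> Field r"
    proof
      fix p assume "p \<in> r"
      then show "p \<in> Field r \<times> Field r" by (cases p) (auto intro: FieldI1 FieldI2)
    qed
    show "refl_on (Field r) r" unfolding refl_on_def F
    proof
      fix x assume "x \<in> ?e ` Q"
      then obtain A where "A \<in> Q" "x = ?e A" by blast
      then show "(x, x) \<in> r" using mem by simp
    qed
    show "trans r"
    proof (rule transI)
      fix x y z assume xy: "(x, y) \<in> r" and yz: "(y, z) \<in> r"
      obtain A B where 1: "x = ?e A" "y = ?e B" "A \<in> Q" "B \<in> Q" "A \<subseteq> B" using rE[OF xy] by blast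
      obtain B' C where 2: "y = ?e B'" "z = ?e C" "B' \<in> Q" "C \<in> Q" "B' \<subseteq> C" using rE[OF yz] by blast
      have "B = B'" using inj_on_eq_iff[OF inj 1(4) 2(3)] 1(2) 2(1) by simp
      then have "A \<subseteq> C" using 1(5) 2(5) by simp
      then show "(x, z) \<in> r" using mem[OF 1(3) 2(4)] 1(1) 2(2) by simp
    qed
    show "antisym r"
    proof (rule antisymI)
      fix x y assume xy: "(x, y) \<in> r" and yx: "(y, x) \<in> r"
      obtain A B where AB: "x = ?e A" "y = ?e B" "A \<in> Q" "B \<in> Q" "A \<subseteq> B" using rE[OF xy] by blast
      have "B \<subseteq> A" using mem[OF AB(4) AB(3)] yx AB(1,2) by simp
      then show "x = y" using AB by simp
    qed
    show "total_on (Field r) r" unfolding total_on_def F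
    proof (intro ballI impI)
      fix x y assume "x \<in> ?e ` Q" "y \<in> ?e ` Q" "x \<noteq> y"
      then obtain A B where AB: "A \<in> Q" "B \<in> Q" "x = ?e A" "y = ?e B" by blast
      show "(x, y) \<in> r \<or> (y, x) \<in> r"
      proof (cases "A \<subseteq> B")
        case True then show ?thesis using mem[OF AB(1,2)] AB(3,4) by simp
      next
        case False then have "B \<subseteq> A" using lin[OF AB(1,2)] by simp
        then show ?thesis using mem[OF AB(2,1)] AB(3,4) by simp
      qed
    qed
  qed
  show "Well_order r"
    unfolding Linear_order_Well_order_iff[OF lo]
  proof (intro allI impI)
    fix S assume S: "S \<subseteq> Field r" "S \<noteq> {}"
    define SQ where "SQ = {A\<in>Q. ?e A \<in> S}"
    have "SQ \<subseteq> Q" unfolding SQ_def by blast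
    moreover have "SQ \<noteq> {}"
    proof -
      obtain x where "x \<in> S" using S(2) by blast
      then obtain A where "A \<in> Q" "x = ?e A" using S(1) F by blast
      then show ?thesis unfolding SQ_def using `x \<in> S` by blast
    qed
    ultimately obtain A where A: "A \<in> SQ" "\<forall>B\<in>SQ. A \<subseteq> B" using wfQ by blast
    have AQ: "A \<in> Q" using A(1) unfolding SQ_def by blast
    show "\<exists>a\<in>S. \<forall>a'\<in>S. (a, a') \<in> r"
    proof (rule bexI[of _ "?e A"])
      show "?e A \<in> S" using A unfolding SQ_def by blast
      show "\<forall>a'\<in>S. (?e A, a') \<in> r"
      proof
        fix a' assume "a' \<in> S"
        then obtain B where "B \<in> Q" "a' = ?e B" using S(1) F by blast
        then have "B \<in> SQ" using `a' \<in> S` unfolding SQ_def by blast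
        then have "A \<subseteq> B" using A(2) by blast
        then show "(?e A, a') \<in> r" using mem[OF AQ `B \<in> Q`] `a' = ?e B` by simp
      qed
    qed
  qed
qed

lemma step_SRel: "step f s u \<Longrightarrow> (st s, st u) \<in> SRel"
proof -
  assume "step f s u"
  then have "u \<in> set (esl f s)" by (simp add: step_iff)
  then obtain P' \<eta>' m ds where e: "(P', \<eta>', m, ds) \<in> set (sl (f (trace s)) (fst s) (fst (snd s)))"
    "u = (P', \<eta>', Prob s * m, trace s @ ds)" unfolding esl_def by auto
  have "st u = (P', \<eta>')" using e(2) by (simp add: st_def)
  then show ?thesis unfolding SRel_def st_def using e(1) by auto
qed

lemma steps_SRel: "steps f n s t \<Longrightarrow> (st s, st t) \<in> SRel\<^sup>*"
proof (induction n arbitrary: s)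
  case (Suc n)
  then obtain u where u: "step f s u" "steps f n u t" by auto
  show ?case using step_SRel[OF u(1)] Suc.IH[OF u(2)] by (rule converse_rtrancl_into_rtrancl)
qed simp

lemma Reach_SRel: "\<sigma>' \<in> Reach \<sigma> \<Longrightarrow> (\<sigma>, \<sigma>') \<in> SRel\<^sup>+"
proof -
  assume "\<sigma>' \<in> Reach \<sigma>"
  then obtain f a' w' n where n: "1 \<le> n" "steps f n (init \<sigma>) (fst \<sigma>', snd \<sigma>', a', w')"
    unfolding Reach_def by blast
  then obtain n' where "n = Suc n'" by (cases n) auto
  then obtain u where u: "step f (init \<sigma>) u" "steps f n' u (fst \<sigma>', snd \<sigma>', a', w')" using n by auto
  have 1: "(st (init \<sigma>), st u) \<in> SRel" by (rule step_SRel[OF u(1)])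
  have 2: "(st u, st (fst \<sigma>', snd \<sigma>', a', w')) \<in> SRel\<^sup>*" by (rule steps_SRel[OF u(2)])
  have "st (init \<sigma>) = \<sigma>" "st (fst \<sigma>', snd \<sigma>', a', w') = \<sigma>'" by (simp_all add: st_def init_def)
  then show ?thesis using rtrancl_into_trancl2[OF 1 2] by simp
qed

lemma SRel_finite: "finite (SRel `` {x})"
proof -
  have "SRel `` {x} \<subseteq> (\<lambda>e. (fst e, fst (snd e))) ` (set (sl Ln (fst x) (snd x)) \<union> set (sl Rn (fst x) (snd x)))"
  proof
    fix y assume "y \<in> SRel `` {x}"
    then obtain d m ds where e: "(fst y, snd y, m, ds) \<in> set (sl d (fst x) (snd x))"
      unfolding SRel_def by auto
    have "(fst y, snd y, m, ds) \<in> set (sl Ln (fst x) (snd x)) \<union> set (sl Rn (fst x) (snd x))"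
    proof (cases "is_nd (fst x)")
      case True
      then obtain l r where "\<forall>d. sl d (fst x) (snd x) = (if d = Ln then [(fst l, snd l, 1, [Ln])]
        else if d = Rn then [(fst r, snd r, 1, [Rn])] else [])" using nd_sl by blast
      then show ?thesis using e by (auto split: if_splits)
    next
      case False
      then show ?thesis using e sl_indep[OF False, of d "snd x" Ln] by simp
    qed
    then show "y \<in> (\<lambda>e. (fst e, fst (snd e))) ` (set (sl Ln (fst x) (snd x)) \<union> set (sl Rn (fst x) (snd x)))"
      by (rule rev_image_eqI) simp
  qed
  then show ?thesis by (rule finite_subset) auto
qed

lemma countable_SRel_star: "countable (SRel\<^sup>* `` {x})"
proof (rule countable_rtrancl)
  fix Y :: "pstate set" assume "countable Y"
  have eq: "SRel `` Y = (\<Union>y\<in>Y. SRel `` {y})" by blast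
  show "countable (SRel `` Y)" unfolding eq
    by (rule countable_UN[OF `countable Y`]) (rule countable_finite[OF SRel_finite])
qed simp

lemma step_init: "step f (init \<tau>) (P', \<eta>', a', w') \<longleftrightarrow>
   (\<exists>m ds. (P', \<eta>', m, ds) \<in> set (sl (f []) (fst \<tau>) (snd \<tau>)) \<and> a' = m \<and> w' = ds)"
  unfolding step_iff esl_def init_def by (auto simp: Prob_def trace_def)

definition f_const :: "dir \<Rightarrow> sched" where "f_const d = (\<lambda>_. d)"

lemma f_const_sched: "d = Ln \<or> d = Rn \<Longrightarrow> f_const d \<in> schedulers"
  unfolding f_const_def schedulers_def by auto

lemma det_op:
  assumes "det_succ \<tau> \<tau>'"
  shows "G \<tau>' \<le> op G \<tau>"
proof -
  obtain w' where "step (f_const Ln) (init \<tau>) (fst \<tau>', snd \<tau>', 1, w')"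
    using assms f_const_sched[of Ln] unfolding det_succ_def by blast
  then have "(fst \<tau>', snd \<tau>', 1, w') \<in> set (sl Ln (fst \<tau>) (snd \<tau>))"
    unfolding step_init f_const_def by auto
  then have "sl Ln (fst \<tau>) (snd \<tau>) = [(fst \<tau>', snd \<tau>', 1, w')]" by (rule sl_one)
  then have "val Ln G \<tau> = G \<tau>'" by (simp add: val_def)
  then show ?thesis using val_le_op[of Ln G \<tau>] by simp
qed

lemma nd_op:
  assumes "nondet_succ \<tau> l r"
  shows "max (G l) (G r) \<le> op G \<tau>"
proof -
  have "step (f_const Ln) (init \<tau>) (fst l, snd l, 1, [Ln]) \<or> step (f_const Ln) (init \<tau>) (fst r, snd r, 1, [Rn])"
    using assms f_const_sched[of Ln] unfolding nondet_succ_def by blast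
  moreover have "\<not> step (f_const Ln) (init \<tau>) (fst r, snd r, 1, [Rn])"
    unfolding step_init f_const_def using sl_Rn_ds by fastforce
  ultimately have "(fst l, snd l, 1, [Ln]) \<in> set (sl Ln (fst \<tau>) (snd \<tau>))"
    unfolding step_init f_const_def by auto
  then have L: "sl Ln (fst \<tau>) (snd \<tau>) = [(fst l, snd l, 1, [Ln])]" and nd: "is_nd (fst \<tau>)"
    using sl_one sl_Ln_ds by blast+
  have "step (f_const Rn) (init \<tau>) (fst l, snd l, 1, [Ln]) \<or> step (f_const Rn) (init \<tau>) (fst r, snd r, 1, [Rn])"
    using assms f_const_sched[of Rn] unfolding nondet_succ_def by blast
  moreover have "\<not> step (f_const Rn) (init \<tau>) (fst l, snd l, 1, [Ln])"
    unfolding step_init f_const_def using sl_Ln_ds by fastforce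
  ultimately have "(fst r, snd r, 1, [Rn]) \<in> set (sl Rn (fst \<tau>) (snd \<tau>))"
    unfolding step_init f_const_def by auto
  then have R: "sl Rn (fst \<tau>) (snd \<tau>) = [(fst r, snd r, 1, [Rn])]" using sl_one by blast
  show ?thesis unfolding op_def using nd L R by (simp add: val_def)
qed

lemma prob_op:
  assumes "prob_succ \<tau> p l r"
  shows "real_of_rat p * G l + (1 - real_of_rat p) * G r \<le> op G \<tau>"
proof -
  have a: "step (f_const Ln) (init \<tau>) (fst l, snd l, p, [Lp])" "step (f_const Ln) (init \<tau>) (fst r, snd r, 1 - p, [Rp])"
    using assms f_const_sched[of Ln] unfolding prob_succ_def by blast+
  then have el: "(fst l, snd l, p, [Lp]) \<in> set (sl Ln (fst \<tau>) (snd \<tau>))"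
    and er: "(fst r, snd r, 1 - p, [Rp]) \<in> set (sl Ln (fst \<tau>) (snd \<tau>))"
    unfolding step_init f_const_def by auto
  have nnd: "\<not> is_nd (fst \<tau>)" using sl_Lp_ds[OF el] .
  have "val Ln G \<tau> = real_of_rat p * G l + (1 - real_of_rat p) * G r"
    using sl_shape[of Ln "fst \<tau>" "snd \<tau>"] el er unfolding shape_def
    by (auto simp: val_def of_rat_diff)
  then show ?thesis using nnd by (simp add: op_def)
qed

theorem theorem5p12:
  fixes P :: prog
  assumes "P \<in> PAST"
  shows "\<exists>(r :: nat rel) (g :: pstate \<Rightarrow> nat) (k :: pstate \<Rightarrow> (pstate \<Rightarrow> real) \<times> real).
     Well_order r \<and>
     (\<forall>\<sigma>\<in>Reach (P, eta0). g \<sigma> \<in> Field r) \<and>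
     (\<forall>\<sigma>\<in>Reach (P, eta0). g \<sigma> = ord_zero r \<longleftrightarrow> terminal \<sigma>) \<and>
     (\<forall>\<sigma>\<in>Reach (P, eta0). \<not> terminal \<sigma> \<longrightarrow>
        RSM_map (fst (k \<sigma>)) (snd (k \<sigma>)) \<and>
        (\<forall>\<tau>. fst (k \<sigma>) \<tau> = 0 \<longleftrightarrow>
           \<tau> \<in> {\<sigma>' \<in> Reach \<sigma>. ord_less r (g \<sigma>') (g \<sigma>)} \<union> (UNIV - Reach \<sigma>)))"
proof -
  define \<sigma>0 where "\<sigma>0 = (P, eta0)"
  define R0 where "R0 = Reach \<sigma>0"
  have TopB0: "B0 \<subseteq> Top" by (rule tower_B0[OF Top_tower])
  have Topc: "sclosed Top" by (rule tower_closed[OF Top_tower])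
  have cover: "R0 \<subseteq> Top"
  proof
    fix \<sigma> assume s: "\<sigma> \<in> R0"
    show "\<sigma> \<in> Top"
    proof (rule ccontr)
      assume ns: "\<sigma> \<notin> Top"
      have "(\<sigma>0, \<sigma>) \<in> SRel\<^sup>*" using Reach_SRel s unfolding R0_def by (meson trancl_into_rtrancl)
      then have n0: "\<sigma>0 \<notin> Top" using sclosed_rtrancl[OF Topc] ns by blast
      obtain f where f: "f \<in> schedulers" "ExpRuntime \<sigma>0 f = top"
        using bad_sched[OF TopB0 Topc notTop_unfin n0] by blast
      have "ExpRuntime \<sigma>0 f < \<infinity>" using assms f(1) unfolding PAST_def \<sigma>0_def by blast
      then show False using f(2) by simp
    qed
  qed
  define Rs where "Rs = SRel\<^sup>* `` {\<sigma>0}"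
  have R0Rs: "R0 \<subseteq> Rs" unfolding R0_def Rs_def using Reach_SRel by (blast dest: trancl_into_rtrancl)
  have ReachRs: "Reach \<sigma> \<subseteq> Rs" if "\<sigma> \<in> R0" for \<sigma>
  proof
    fix \<tau> assume "\<tau> \<in> Reach \<sigma>"
    then have "(\<sigma>, \<tau>) \<in> SRel\<^sup>*" using Reach_SRel by (blast dest: trancl_into_rtrancl)
    moreover have "(\<sigma>0, \<sigma>) \<in> SRel\<^sup>*" using that R0Rs unfolding Rs_def by blast
    ultimately show "\<tau> \<in> Rs" unfolding Rs_def by auto
  qed
  define Q where "Q = insert {} (K ` Rs)"
  have cQ: "countable Q" unfolding Q_def Rs_def using countable_SRel_star by simp
  have Qt: "A \<in> insert {} tower" if "A \<in> Q" for A using that K_in unfolding Q_def by blast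
  have lin: "A \<subseteq> B \<or> B \<subseteq> A" if "A \<in> Q" "B \<in> Q" for A B
    using Qt[OF that(1)] Qt[OF that(2)] tower_linear by blast
  have wfQ: "\<exists>A\<in>S. \<forall>B\<in>S. A \<subseteq> B" if "S \<subseteq> Q" "S \<noteq> {}" for S
  proof (cases "{} \<in> S")
    case True then show ?thesis by blast
  next
    case False
    then have "S \<subseteq> tower" using that(1) Qt by blast
    then show ?thesis using tower_wf that(2) by blast
  qed
  define e where "e = to_nat_on Q"
  define r where "r = {(e A, e B) | A B. A \<in> Q \<and> B \<in> Q \<and> A \<subseteq> B}"
  have wo: "Well_order r" and Fr: "Field r = e ` Q"
    and mem: "\<And>A B. A \<in> Q \<Longrightarrow> B \<in> Q \<Longrightarrow> (e A, e B) \<in> r \<longleftrightarrow> A \<subseteq> B"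
    using wo_chain[OF cQ lin wfQ] unfolding r_def e_def by blast+
  have inj: "inj_on e Q" unfolding e_def using cQ by (rule inj_on_to_nat_on)
  have eQ: "{} \<in> Q" unfolding Q_def by simp
  have KQ: "K \<tau> \<in> Q" if "\<tau> \<in> Rs" for \<tau> using that unfolding Q_def by blast
  have oz: "ord_zero r = e {}"
    unfolding ord_zero_def
  proof (rule the_equality)
    show "e {} \<in> Field r \<and> (\<forall>y\<in>Field r. (e {}, y) \<in> r)"
      using Fr mem eQ by auto
  next
    fix x assume x: "x \<in> Field r \<and> (\<forall>y\<in>Field r. (x, y) \<in> r)"
    then obtain A where A: "A \<in> Q" "x = e A" using Fr by blast
    have "(e A, e {}) \<in> r" using x A Fr eQ by auto
    then have "A = {}" using mem[OF A(1) eQ] by simp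
    then show "x = e {}" using A by simp
  qed
  have ol: "ord_less r (e A) (e B) \<longleftrightarrow> A \<subset> B" if "A \<in> Q" "B \<in> Q" for A B
    unfolding ord_less_def using mem[OF that] inj_on_eq_iff[OF inj that] by auto
  define g where "g \<sigma> = e (K \<sigma>)" for \<sigma>
  define h where "h \<sigma> \<tau> = (if \<tau> \<in> Reach \<sigma> \<and> \<tau> \<notin> K \<sigma> then V (K \<sigma>) \<tau> else 0)" for \<sigma> \<tau>
  define k where "k \<sigma> = (h \<sigma>, 1::real)" for \<sigma>
  have termB0: "terminal \<sigma> \<longleftrightarrow> \<sigma> \<in> B0" for \<sigma> unfolding terminal_def B0_def by simp
  show ?thesis
  proof (intro exI conjI ballI impI)
    show "Well_order r" by (rule wo)
  next
    fix \<sigma> assume "\<sigma> \<in> Reach (P, eta0)"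
    then have "\<sigma> \<in> Rs" using R0Rs unfolding R0_def \<sigma>0_def by blast
    then show "g \<sigma> \<in> Field r" unfolding g_def Fr using KQ by blast
  next
    fix \<sigma> assume "\<sigma> \<in> Reach (P, eta0)"
    then have s: "\<sigma> \<in> Rs" using R0Rs unfolding R0_def \<sigma>0_def by blast
    have "g \<sigma> = ord_zero r \<longleftrightarrow> K \<sigma> = {}"
      unfolding g_def oz using inj_on_eq_iff[OF inj KQ[OF s] eQ] .
    also have "\<dots> \<longleftrightarrow> terminal \<sigma>" unfolding termB0 using K_B0 K_nonB0(4) by blast
    finally show "g \<sigma> = ord_zero r \<longleftrightarrow> terminal \<sigma>" .
  next
    fix \<sigma> assume sR: "\<sigma> \<in> Reach (P, eta0)" and nt: "\<not> terminal \<sigma>"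
    have sR0: "\<sigma> \<in> R0" using sR unfolding R0_def \<sigma>0_def .
    have nB0: "\<sigma> \<notin> B0" using nt termB0 by blast
    define Y where "Y = K \<sigma>"
    have Yt: "Y \<in> tower" unfolding Y_def using K_nonB0(1)[OF nB0] .
    have sX: "\<sigma> \<in> F Y" unfolding Y_def using K_level[OF _ nB0] cover sR0 by blast
    have Xc: "sclosed (F Y)" using tower_closed[OF tower.succ[OF Yt]] .
    have RX: "Reach \<sigma> \<subseteq> F Y"
    proof
      fix \<tau> assume "\<tau> \<in> Reach \<sigma>"
      then have "(\<sigma>, \<tau>) \<in> SRel\<^sup>*" using Reach_SRel by (blast dest: trancl_into_rtrancl)
      then show "\<tau> \<in> F Y" using sclosed_rtrancl[OF Xc sX] by blast
    qed
    have finX: "fin Y y" if "y \<in> F Y" for y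
      using that fin_inB unfolding F_def by blast
    have VX: "0 \<le> V Y y" if "y \<in> F Y" for y using V_nonneg[OF finX[OF that]] .
    have hs: "h \<sigma> \<tau> = (if \<tau> \<in> Reach \<sigma> \<and> \<tau> \<notin> Y then V Y \<tau> else 0)" for \<tau>
      unfolding h_def Y_def ..
    show "RSM_map (fst (k \<sigma>)) (snd (k \<sigma>))"
      unfolding RSM_map_def k_def fst_conv snd_conv
    proof (intro conjI allI impI)
      show "(0::real) < 1" by simp
    next
      fix \<tau> show "0 \<le> h \<sigma> \<tau>"
      proof (cases "\<tau> \<in> Reach \<sigma> \<and> \<tau> \<notin> Y")
        case True
        then have "\<tau> \<in> F Y" using RX by blast
        then show ?thesis unfolding hs using True VX by simp
      next
        case False
        then show ?thesis unfolding hs by auto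
      qed
    next
      fix \<tau> assume "terminal \<tau>"
      then have "\<tau> \<in> Y" using termB0 tower_B0[OF Yt] by blast
      then show "h \<sigma> \<tau> = 0" unfolding hs by simp
    next
      fix \<tau> assume pos: "0 < h \<sigma> \<tau>"
      then have tR: "\<tau> \<in> Reach \<sigma>" and tY: "\<tau> \<notin> Y" unfolding hs by (auto split: if_splits)
      have tX: "\<tau> \<in> F Y" using RX tR by blast
      have hV: "h \<sigma> \<tau> = V Y \<tau>" unfolding hs using tR tY by simp
      have succX: "y \<in> F Y" if "(\<tau>, y) \<in> SRel" for y using Xc tX that unfolding sclosed_def by blast
      have bell: "1 + op (V Y) \<tau> \<le> V Y \<tau>"
        by (rule bellman[OF tY finX[OF tX]]) (rule finX[OF succX])
      have hle: "op (h \<sigma>) \<tau> \<le> op (V Y) \<tau>"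
      proof (rule op_mono)
        fix y assume "(\<tau>, y) \<in> SRel"
        then show "h \<sigma> y \<le> V Y y" unfolding hs using VX[OF succX] by auto
      qed
      have key: "op (h \<sigma>) \<tau> + 1 \<le> h \<sigma> \<tau>" using bell hle hV by simp
      show "h \<sigma> \<sigma>' + 1 \<le> h \<sigma> \<tau>" if "det_succ \<tau> \<sigma>'" for \<sigma>'
        using det_op[OF that, of "h \<sigma>"] key by linarith
      show "max (h \<sigma> \<sigma>l) (h \<sigma> \<sigma>r) + 1 \<le> h \<sigma> \<tau>" if "nondet_succ \<tau> \<sigma>l \<sigma>r" for \<sigma>l \<sigma>r
        using nd_op[OF that, of "h \<sigma>"] key by linarith
      show "real_of_rat p * h \<sigma> \<sigma>l + (1 - real_of_rat p) * h \<sigma> \<sigma>r + 1 \<le> h \<sigma> \<tau>"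
        if "prob_succ \<tau> p \<sigma>l \<sigma>r" for p \<sigma>l \<sigma>r
        using prob_op[OF that, of "h \<sigma>"] key by linarith
    qed
    show "\<forall>\<tau>. fst (k \<sigma>) \<tau> = 0 \<longleftrightarrow>
           \<tau> \<in> {\<sigma>' \<in> Reach \<sigma>. ord_less r (g \<sigma>') (g \<sigma>)} \<union> (UNIV - Reach \<sigma>)"
    proof
      fix \<tau>
      show "fst (k \<sigma>) \<tau> = 0 \<longleftrightarrow>
           \<tau> \<in> {\<sigma>' \<in> Reach \<sigma>. ord_less r (g \<sigma>') (g \<sigma>)} \<union> (UNIV - Reach \<sigma>)"
      proof (cases "\<tau> \<in> Reach \<sigma>")
        case False
        then show ?thesis unfolding k_def hs by simp
      next
        case True
        have tX: "\<tau> \<in> F Y" using RX True by blast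
        have "h \<sigma> \<tau> = 0 \<longleftrightarrow> \<tau> \<in> Y"
        proof
          assume "h \<sigma> \<tau> = 0"
          show "\<tau> \<in> Y"
          proof (rule ccontr)
            assume "\<tau> \<notin> Y"
            then have "1 \<le> V Y \<tau>" using V_pos[OF finX[OF tX]] by blast
            then show False using `h \<sigma> \<tau> = 0` `\<tau> \<notin> Y` True unfolding hs by simp
          qed
        qed (simp add: hs)
        also have "\<dots> \<longleftrightarrow> K \<tau> \<subset> Y" by (rule K_less[OF Yt])
        also have "\<dots> \<longleftrightarrow> ord_less r (g \<tau>) (g \<sigma>)"
          unfolding g_def Y_def
          using ol[OF KQ KQ] ReachRs[OF sR0] True R0Rs sR0 by blast
        finally show ?thesis unfolding k_def using True by simp
      qed
    qed
  qed
qed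

end
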